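(* Let $\textnormal{R}\in\{\textnormal{ML},\textnormal{wML},\textnormal{C},\textnormal{S},\textnormal{CH},\textnormal{wCH}\}$, let $\omega\in\Omega$ be a path that is $\textnormal{R}$-random for a computable forecasting system $\varphi$, and let $\epsilon_1,\epsilon_2>0$. Then $\omega$ is $\textnormal{R}$-random for the interval forecast $\big[\liminf_{n\to\infty}\underline{\varphi}(\omega_{1:n})-\epsilon_1,\ \limsup_{n\to\infty}\overline{\varphi}(\omega_{1:n})+\epsilon_2\big]\cap[0,1].$
   Context: $\mathcal{X}=\{0,1\}$; $\Omega=\mathcal{X}^{\mathbb{N}}$ (paths); $\mathbb{S}=\bigcup_{n\geq0}\mathcal{X}^n$ (situations), $\square$ empty string, $|s|$ length, $\omega_{1:n}=(\omega_1,\dots,\omega_n)$, $\omega_{1:0}=\square$. $\mathcal{I}$: nonempty closed intervals $I\subseteq[0,1]$. A forecasting system is a map $\varphi:\mathbb{S}\to\mathcal{I}$, $\underline{\varphi}=\min\varphi$, $\overline{\varphi}=\max\varphi$; an interval forecast $I$ is identified with the constant forecasting system $s\mapsto I$. A real map $r$ on a countable effectively encoded set $\mathcal D$ is computable if there is a recursive $q:\mathcal{D}\times\mathbb{N}_0\to\mathbb{Q}$ with $|r(d)-q(d,n)|<2^{-n}$; lower semicomputable if there is a recursive $q$ with $q(d,n+1)\ge q(d,n)$ and $r(d)=\lim_nq(d,n)$. $\varphi$ computable if $\underline\varphi,\overline\varphi$ are. $\overline{E}_I(f)=\max_{p\in I}[pf(1)+(1-p)f(0)]$. A real process $F:\mathbb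 S\to\mathbb R$ is a supermartingale for $\varphi$ if $\overline{E}_{\varphi(s)}(F(s\,\cdot)-F(s))\le0$ for all $s$; a test supermartingale if also $F\ge0$, $F(\square)=1$. A multiplier process $D$ maps situations to gambles $\mathcal X\to\mathbb R$, generating $D^{\circledcirc}(x_1,\dots,x_n)=\prod_{k=0}^{n-1}D(x_{1:k})(x_{k+1})$; lower semicomputable if $(s,x)\mapsto D(s)(x)$ is. For path $\omega$ and forecasting system $\varphi$: ML-random if no lower semicomputable test supermartingale $T$ for $\varphi$ has $\limsup_nT(\omega_{1:n})=\infty$; wML-random if no test supermartingale for $\varphi$ of the form $D^{\circledcirc}$, $D$ lower semicomputable, has this; C-random if no computable test supermartingale for $\varphi$ has this; S-random if there is no computable test supermartingale $T$ for $\varphi$ and computable non-decreasing unbounded $\tau:\mathbb N_0\to\mathbb R_{\ge0}$ with $\limsup_n[T(\omega_{1:n})-\tau(n)]\ge0$; CH-random (resp. wCH-random) if for every recursive (resp. recursive and temporal, i.e. depending only on $|s|$) $S:\mathbb S\to\{0,1\}$ with $\sum_{k=0}^{n-1}S(\omega_{1:k})\to\infty$: $\liminf_n \frac{\sum_{k<n}S(\omega_{1:k})[\omega_{k+1}-\underline\varphi(\omega_{1:k})]}{\sum_{k<n}S(\omega_{1:k})}\ge0$ and $\limsup_n \frac{\sum_{k<n}S(\omega_{1:k})[\omega_{k+1}-\overline\varphi(\omega_{1:k})]}{\sum_{k<n}S(\omega_{1:k})}\le0$. *)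

theory Defs
  imports Complex_Main "HOL-Library.Nat_Bijection" "HOL-Library.Extended_Real"
begin

datatype recf = Zr | Sc | Pj nat | Cn recf "recf list" | Pr recf recf | Mn recf

inductive reval :: "recf \<Rightarrow> nat list \<Rightarrow> nat \<Rightarrow> bool" where
  zero: "reval Zr xs 0"
| succ: "reval Sc (x # xs) (Suc x)"
| proj: "i < length xs \<Longrightarrow> reval (Pj i) xs (xs ! i)"
| comp: "length ys = length gs \<Longrightarrow> (\<forall>i<length gs. reval (gs ! i) xs (ys ! i))
          \<Longrightarrow> reval f ys y \<Longrightarrow> reval (Cn f gs) xs y"
| prec0: "reval f xs y \<Longrightarrow> reval (Pr f g) (0 # xs) y"
| precS: "reval (Pr f g) (n # xs) r \<Longrightarrow> reval g (n # r # xs) y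
          \<Longrightarrow> reval (Pr f g) (Suc n # xs) y"
| mu: "reval f (n # xs) 0 \<Longrightarrow> (\<forall>m<n. \<exists>v. reval f (m # xs) (Suc v))
          \<Longrightarrow> reval (Mn f) xs n"

definition recursive1 :: "(nat \<Rightarrow> nat) \<Rightarrow> bool" where
  "recursive1 f \<longleftrightarrow> (\<exists>c. \<forall>x. reval c [x] (f x))"

text \<open>Situations are bool lists (True = 1, False = 0); paths are nat => bool,
  with omega k standing for omega_{k+1}.\<close>
definition enc_sit :: "bool list \<Rightarrow> nat" where
  "enc_sit s = list_encode (map of_bool s)"

definition enc_sitx :: "bool list \<times> bool \<Rightarrow> nat" where
  "enc_sitx p = prod_encode (enc_sit (fst p), of_bool (snd p))"

definition enc_nat :: "nat \<Rightarrow> nat" where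
  "enc_nat n = n"

definition rat_code :: "nat \<Rightarrow> real" where
  "rat_code n = (case prod_decode n of (a, b) \<Rightarrow> real_of_int (int_decode a) / real (Suc b))"

definition computable_on :: "('a \<Rightarrow> nat) \<Rightarrow> ('a \<Rightarrow> real) \<Rightarrow> bool" where
  "computable_on enc r \<longleftrightarrow> (\<exists>q. recursive1 q \<and>
     (\<forall>d n. \<bar>r d - rat_code (q (prod_encode (enc d, n)))\<bar> < (1/2) ^ n))"

definition lsc_on :: "('a \<Rightarrow> nat) \<Rightarrow> ('a \<Rightarrow> real) \<Rightarrow> bool" where
  "lsc_on enc r \<longleftrightarrow> (\<exists>q. recursive1 q \<and>
     (\<forall>d. (\<forall>n. rat_code (q (prod_encode (enc d, n))) \<le> rat_code (q (prod_encode (enc d, Suc n))))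
        \<and> (\<lambda>n. rat_code (q (prod_encode (enc d, n)))) \<longlonglongrightarrow> r d))"

definition recursive_sel :: "(bool list \<Rightarrow> bool) \<Rightarrow> bool" where
  "recursive_sel S \<longleftrightarrow> (\<exists>q. recursive1 q \<and> (\<forall>s. q (enc_sit s) = of_bool (S s)))"

definition prefix :: "(nat \<Rightarrow> bool) \<Rightarrow> nat \<Rightarrow> bool list" where
  "prefix \<omega> n = map \<omega> [0..<n]"

definition forecasting_system :: "(bool list \<Rightarrow> real set) \<Rightarrow> bool" where
  "forecasting_system \<phi> \<longleftrightarrow> (\<forall>s. \<exists>a b. 0 \<le> a \<and> a \<le> b \<and> b \<le> 1 \<and> \<phi> s = {a..b})"

definition lowerF :: "(bool list \<Rightarrow> real set) \<Rightarrow> bool list \<Rightarrow> real" where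
  "lowerF \<phi> s = Inf (\<phi> s)"

definition upperF :: "(bool list \<Rightarrow> real set) \<Rightarrow> bool list \<Rightarrow> real" where
  "upperF \<phi> s = Sup (\<phi> s)"

definition computable_fs :: "(bool list \<Rightarrow> real set) \<Rightarrow> bool" where
  "computable_fs \<phi> \<longleftrightarrow> computable_on enc_sit (lowerF \<phi>) \<and> computable_on enc_sit (upperF \<phi>)"

definition upperE :: "real set \<Rightarrow> (bool \<Rightarrow> real) \<Rightarrow> real" where
  "upperE I f = Sup ((\<lambda>p. p * f True + (1 - p) * f False) ` I)"

definition supermartingale :: "(bool list \<Rightarrow> real set) \<Rightarrow> (bool list \<Rightarrow> real) \<Rightarrow> bool" where
  "supermartingale \<phi> F \<longleftrightarrow> (\<forall>s. upperE (\<phi> s) (\<lambda>x. F (s @ [x]) - F s) \<le> 0)"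

definition test_supermartingale :: "(bool list \<Rightarrow> real set) \<Rightarrow> (bool list \<Rightarrow> real) \<Rightarrow> bool" where
  "test_supermartingale \<phi> T \<longleftrightarrow> supermartingale \<phi> T \<and> (\<forall>s. T s \<ge> 0) \<and> T [] = 1"

definition mult_proc :: "(bool list \<Rightarrow> bool \<Rightarrow> real) \<Rightarrow> bool list \<Rightarrow> real" where
  "mult_proc D s = (\<Prod>k<length s. D (take k s) (s ! k))"

definition unbounded_on :: "(bool list \<Rightarrow> real) \<Rightarrow> (nat \<Rightarrow> bool) \<Rightarrow> bool" where
  "unbounded_on T \<omega> \<longleftrightarrow> limsup (\<lambda>n. ereal (T (prefix \<omega> n))) = \<infinity>"

datatype rnotion = R_ML | R_wML | R_C | R_S | R_CH | R_wCH

definition random_ML :: "(bool list \<Rightarrow> real set) \<Rightarrow> (nat \<Rightarrow> bool) \<Rightarrow> bool" where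
  "random_ML \<phi> \<omega> \<longleftrightarrow> \<not> (\<exists>T. lsc_on enc_sit T \<and> test_supermartingale \<phi> T \<and> unbounded_on T \<omega>)"

definition random_wML :: "(bool list \<Rightarrow> real set) \<Rightarrow> (nat \<Rightarrow> bool) \<Rightarrow> bool" where
  "random_wML \<phi> \<omega> \<longleftrightarrow> \<not> (\<exists>D. lsc_on enc_sitx (\<lambda>(s, x). D s x)
      \<and> test_supermartingale \<phi> (mult_proc D) \<and> unbounded_on (mult_proc D) \<omega>)"

definition random_C :: "(bool list \<Rightarrow> real set) \<Rightarrow> (nat \<Rightarrow> bool) \<Rightarrow> bool" where
  "random_C \<phi> \<omega> \<longleftrightarrow> \<not> (\<exists>T. computable_on enc_sit T \<and> test_supermartingale \<phi> T \<and> unbounded_on T \<omega>)"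

definition random_S :: "(bool list \<Rightarrow> real set) \<Rightarrow> (nat \<Rightarrow> bool) \<Rightarrow> bool" where
  "random_S \<phi> \<omega> \<longleftrightarrow> \<not> (\<exists>T \<tau>. computable_on enc_sit T \<and> test_supermartingale \<phi> T
      \<and> computable_on enc_nat \<tau> \<and> mono \<tau> \<and> (\<forall>n. \<tau> n \<ge> 0) \<and> (\<forall>B. \<exists>n. \<tau> n > B)
      \<and> limsup (\<lambda>n. ereal (T (prefix \<omega> n) - \<tau> n)) \<ge> 0)"

definition CH_cond :: "(bool list \<Rightarrow> real set) \<Rightarrow> (nat \<Rightarrow> bool) \<Rightarrow> (bool list \<Rightarrow> bool) \<Rightarrow> bool" where
  "CH_cond \<phi> \<omega> Sel \<longleftrightarrow>
     (filterlim (\<lambda>n. \<Sum>k<n. of_bool (Sel (prefix \<omega> k)) :: real) at_top sequentially \<longrightarrow>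
       liminf (\<lambda>n. ereal ((\<Sum>k<n. of_bool (Sel (prefix \<omega> k)) * (of_bool (\<omega> k) - lowerF \<phi> (prefix \<omega> k)))
                          / (\<Sum>k<n. of_bool (Sel (prefix \<omega> k))))) \<ge> 0
     \<and> limsup (\<lambda>n. ereal ((\<Sum>k<n. of_bool (Sel (prefix \<omega> k)) * (of_bool (\<omega> k) - upperF \<phi> (prefix \<omega> k)))
                          / (\<Sum>k<n. of_bool (Sel (prefix \<omega> k))))) \<le> 0)"

definition random_CH :: "(bool list \<Rightarrow> real set) \<Rightarrow> (nat \<Rightarrow> bool) \<Rightarrow> bool" where
  "random_CH \<phi> \<omega> \<longleftrightarrow> (\<forall>Sel. recursive_sel Sel \<longrightarrow> CH_cond \<phi> \<omega> Sel)"

definition random_wCH :: "(bool list \<Rightarrow> real set) \<Rightarrow> (nat \<Rightarrow> bool) \<Rightarrow> bool" where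
  "random_wCH \<phi> \<omega> \<longleftrightarrow> (\<forall>Sel. recursive_sel Sel \<and> (\<exists>g. \<forall>s. Sel s = g (length s))
      \<longrightarrow> CH_cond \<phi> \<omega> Sel)"

fun is_random :: "rnotion \<Rightarrow> (bool list \<Rightarrow> real set) \<Rightarrow> (nat \<Rightarrow> bool) \<Rightarrow> bool" where
  "is_random R_ML = random_ML"
| "is_random R_wML = random_wML"
| "is_random R_C = random_C"
| "is_random R_S = random_S"
| "is_random R_CH = random_CH"
| "is_random R_wCH = random_wCH"

definition limit_interval :: "(bool list \<Rightarrow> real set) \<Rightarrow> (nat \<Rightarrow> bool) \<Rightarrow> real \<Rightarrow> real \<Rightarrow> real set" where
  "limit_interval \<phi> \<omega> e1 e2 =
     {real_of_ereal (liminf (\<lambda>n. ereal (lowerF \<phi> (prefix \<omega> n)))) - e1 ..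
      real_of_ereal (limsup (\<lambda>n. ereal (upperF \<phi> (prefix \<omega> n)))) + e2} \<inter> {0..1}"

end

theory Submission
  imports Defs
begin


definition rec2 :: "(nat \<Rightarrow> nat \<Rightarrow> nat) \<Rightarrow> bool" where
  "rec2 f \<longleftrightarrow> (\<exists>c. \<forall>x y. reval c [x, y] (f x y))"

lemma reval_Cn1: "reval g xs y \<Longrightarrow> reval f [y] z \<Longrightarrow> reval (Cn f [g]) xs z"
  by (rule reval.comp[of "[y]"]) auto

lemma reval_Cn2: "reval g xs y \<Longrightarrow> reval h xs y' \<Longrightarrow> reval f [y, y'] z \<Longrightarrow> reval (Cn f [g, h]) xs z"
  by (rule reval.comp[of "[y, y']"]) (auto simp: less_Suc_eq)

lemma reval_Cn3: "reval g xs y \<Longrightarrow> reval h xs y' \<Longrightarrow> reval k xs y'' \<Longrightarrow> reval f [y, y', y''] z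
   \<Longrightarrow> reval (Cn f [g, h, k]) xs z"
  by (rule reval.comp[of "[y, y', y'']"]) (auto simp: less_Suc_eq)

lemma reval_Pj0: "reval (Pj 0) (x # xs) x"
  using reval.proj[of 0 "x # xs"] by simp
lemma reval_Pj1: "reval (Pj 1) (x # y # xs) y"
  using reval.proj[of 1 "x # y # xs"] by simp
lemma reval_Pj2: "reval (Pj 2) (x # y # z # xs) z"
  using reval.proj[of 2 "x # y # z # xs"] by simp

lemma reval_Pr:
  assumes "\<And>x. reval cf [x] (f x)" "\<And>k r x. reval cg [k, r, x] (g k r x)"
  shows "reval (Pr cf cg) [n, x] (rec_nat (f x) (\<lambda>k r. g k r x) n)"
proof (induction n)
  case 0 then show ?case using assms(1) by (simp add: reval.prec0)
next
  case (Suc n) then show ?case using assms(2) by (auto intro: reval.precS)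
qed

fun constc :: "nat \<Rightarrow> recf" where
  "constc 0 = Zr" | "constc (Suc k) = Cn Sc [constc k]"

lemma reval_constc: "reval (constc k) xs k"
  by (induction k) (auto intro: reval.zero reval_Cn1 reval.succ)

lemma rec1_const[intro]: "recursive1 (\<lambda>x. k)"
  unfolding recursive1_def using reval_constc by blast

lemma rec1_id[intro]: "recursive1 (\<lambda>x. x)"
  unfolding recursive1_def using reval_Pj0 by blast

lemma rec1_comp: "recursive1 f \<Longrightarrow> recursive1 g \<Longrightarrow> recursive1 (\<lambda>x. f (g x))"
  unfolding recursive1_def by (blast intro: reval_Cn1)

lemma rec1_app2: "rec2 F \<Longrightarrow> recursive1 a \<Longrightarrow> recursive1 b \<Longrightarrow> recursive1 (\<lambda>x. F (a x) (b x))"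
  unfolding recursive1_def rec2_def by (blast intro: reval_Cn2)

lemma rec1_Suc[intro]: "recursive1 a \<Longrightarrow> recursive1 (\<lambda>x. Suc (a x))"
proof -
  have "recursive1 Suc" unfolding recursive1_def by (blast intro: reval.succ)
  then show "recursive1 a \<Longrightarrow> recursive1 (\<lambda>x. Suc (a x))" using rec1_comp[of Suc a] by simp
qed

lemma rec2_add: "rec2 (\<lambda>n x. n + x)"
proof -
  have "reval (Pr (Pj 0) (Cn Sc [Pj 1])) [n, x] (n + x)" for n x
  proof -
    have "reval (Pr (Pj 0) (Cn Sc [Pj 1])) [n, x] (rec_nat x (\<lambda>k r. Suc r) n)"
      by (rule reval_Pr; (rule reval_Pj0 reval_Cn1 reval_Pj1 reval.succ)+)
    moreover have "rec_nat x (\<lambda>k r. Suc r) n = n + x" by (induction n) auto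
    ultimately show ?thesis by simp
  qed
  then show ?thesis unfolding rec2_def by blast
qed

lemma rec2_mult: "rec2 (\<lambda>n x. n * x)"
proof -
  obtain ca where ca: "\<And>u v. reval ca [u, v] (u + v)" using rec2_add unfolding rec2_def by blast
  have "reval (Pr Zr (Cn ca [Pj 1, Pj 2])) [n, x] (n * x)" for n x
  proof -
    have "reval (Pr Zr (Cn ca [Pj 1, Pj 2])) [n, x] (rec_nat 0 (\<lambda>k r. r + x) n)"
      by (rule reval_Pr; (rule reval.zero reval_Cn2 reval_Pj1 reval_Pj2 ca)+)
    moreover have "rec_nat 0 (\<lambda>k r. r + x) n = n * x" by (induction n) auto
    ultimately show ?thesis by simp
  qed
  then show ?thesis unfolding rec2_def by blast
qed

lemma rec2_monus: "rec2 (\<lambda>x n. x - n)"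
proof -
  have pd: "reval (Pr Zr (Pj 0)) [n, x] (n - 1)" for n x
  proof -
    have "reval (Pr Zr (Pj 0)) [n, x] (rec_nat 0 (\<lambda>k r. k) n)"
      by (rule reval_Pr; (rule reval.zero reval_Pj0)+)
    moreover have "rec_nat 0 (\<lambda>k r. k) n = n - 1" by (cases n) auto
    ultimately show ?thesis by simp
  qed
  have "reval (Cn (Pr (Pj 0) (Cn (Pr Zr (Pj 0)) [Pj 1, Pj 1])) [Pj 1, Pj 0]) [x, n] (x - n)" for n x
  proof -
    have "reval (Pr (Pj 0) (Cn (Pr Zr (Pj 0)) [Pj 1, Pj 1])) [n, x] (rec_nat x (\<lambda>k r. r - 1) n)"
      by (rule reval_Pr; (rule reval_Pj0 reval_Cn2 reval_Pj1 pd)+)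
    moreover have "rec_nat x (\<lambda>k r. r - 1) n = x - n" by (induction n) auto
    ultimately show ?thesis by (metis reval_Cn2 reval_Pj1 reval_Pj0)
  qed
  then show ?thesis unfolding rec2_def by blast
qed

lemma rec1_add[intro]: "recursive1 a \<Longrightarrow> recursive1 b \<Longrightarrow> recursive1 (\<lambda>x. a x + b x)"
  using rec1_app2[OF rec2_add] .
lemma rec1_mult[intro]: "recursive1 a \<Longrightarrow> recursive1 b \<Longrightarrow> recursive1 (\<lambda>x. a x * b x)"
  using rec1_app2[OF rec2_mult] .
lemma rec1_monus[intro]: "recursive1 a \<Longrightarrow> recursive1 b \<Longrightarrow> recursive1 (\<lambda>x. a x - b x)"
  using rec1_app2[OF rec2_monus] .

lemma rec1_triangle[intro]: "recursive1 a \<Longrightarrow> recursive1 (\<lambda>x. triangle (a x))"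
proof -
  obtain ca where ca: "\<And>u v. reval ca [u, v] (u + v)" using rec2_add unfolding rec2_def by blast
  have "reval (Pr Zr (Cn ca [Pj 1, Cn Sc [Pj 0]])) [n, x] (triangle n)" for n x
  proof -
    have "reval (Pr Zr (Cn ca [Pj 1, Cn Sc [Pj 0]])) [n, x] (rec_nat 0 (\<lambda>k r. r + Suc k) n)"
      by (rule reval_Pr; (rule reval.zero reval_Cn2 reval_Cn1 reval_Pj0 reval_Pj1 reval.succ ca)+)
    moreover have "rec_nat 0 (\<lambda>k r. r + Suc k) n = triangle n" by (induction n) auto
    ultimately show ?thesis by simp
  qed
  then have "rec2 (\<lambda>n x. triangle n)" unfolding rec2_def by blast
  from rec1_app2[OF this] show "recursive1 a \<Longrightarrow> recursive1 (\<lambda>x. triangle (a x))" by blast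
qed

lemma rec2_pe: "rec2 (\<lambda>a b. prod_encode (a, b))"
proof -
  have "recursive1 (\<lambda>x. x)" by blast
  obtain ca where ca: "\<And>u v. reval ca [u, v] (u + v)" using rec2_add unfolding rec2_def by blast
  obtain ct where ct: "\<And>u. reval ct [u] (triangle u)"
    using rec1_triangle[OF rec1_id] unfolding recursive1_def by blast
  have "reval (Cn ca [Cn ct [Cn ca [Pj 0, Pj 1]], Pj 0]) [a, b] (triangle (a + b) + a)" for a b
    by (rule reval_Cn2 reval_Cn1 reval_Pj0 reval_Pj1 ca ct)+
  then have "reval (Cn ca [Cn ct [Cn ca [Pj 0, Pj 1]], Pj 0]) [a, b] (prod_encode (a, b))" for a b
    by (simp add: prod_encode_def)
  then show ?thesis unfolding rec2_def by blast
qed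

lemma rec1_pe[intro]: "recursive1 a \<Longrightarrow> recursive1 b \<Longrightarrow> recursive1 (\<lambda>x. prod_encode (a x, b x))"
  using rec1_app2[OF rec2_pe] .

lemma rec2_natrec:
  assumes "recursive1 f" "recursive1 g"
  shows "rec2 (\<lambda>n x. rec_nat (f x) (\<lambda>k r. g (prod_encode (k, prod_encode (r, x)))) n)"
proof -
  obtain cf where cf: "\<And>x. reval cf [x] (f x)" using assms(1) unfolding recursive1_def by blast
  obtain cg where cg: "\<And>x. reval cg [x] (g x)" using assms(2) unfolding recursive1_def by blast
  obtain cp where cp: "\<And>u v. reval cp [u, v] (prod_encode (u, v))" using rec2_pe unfolding rec2_def by blast
  have "reval (Pr cf (Cn cg [Cn cp [Pj 0, Cn cp [Pj 1, Pj 2]]])) [n, x]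
     (rec_nat (f x) (\<lambda>k r. g (prod_encode (k, prod_encode (r, x)))) n)" for n x
    by (rule reval_Pr; (rule cf reval_Cn1 reval_Cn2 cg cp reval_Pj0 reval_Pj1 reval_Pj2)+)
  then show ?thesis unfolding rec2_def by blast
qed

lemma rec1_natrec:
  assumes "recursive1 f" "recursive1 g" "recursive1 a" "recursive1 b"
  shows "recursive1 (\<lambda>z. rec_nat (f (b z)) (\<lambda>k r. g (prod_encode (k, prod_encode (r, b z)))) (a z))"
  using rec1_app2[OF rec2_natrec[OF assms(1,2)] assms(3,4)] .

lemma rec1_mu:
  assumes "recursive1 f" "\<And>x. \<exists>n. f (prod_encode (n, x)) = 0"
  shows "recursive1 (\<lambda>x. LEAST n. f (prod_encode (n, x)) = 0)"
proof -
  obtain cf where cf: "\<And>x. reval cf [x] (f x)" using assms(1) unfolding recursive1_def by blast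
  obtain cp where cp: "\<And>u v. reval cp [u, v] (prod_encode (u, v))" using rec2_pe unfolding rec2_def by blast
  have c2: "reval (Cn cf [Cn cp [Pj 0, Pj 1]]) [n, x] (f (prod_encode (n, x)))" for n x
    by (rule reval_Cn1 reval_Cn2 cf cp reval_Pj0 reval_Pj1)+
  have "reval (Mn (Cn cf [Cn cp [Pj 0, Pj 1]])) [x] (LEAST n. f (prod_encode (n, x)) = 0)" for x
  proof (rule reval.mu)
    show "reval (Cn cf [Cn cp [Pj 0, Pj 1]]) [LEAST n. f (prod_encode (n, x)) = 0, x] 0"
      using c2 LeastI_ex[OF assms(2)[of x]] by metis
    show "\<forall>m<(LEAST n. f (prod_encode (n, x)) = 0). \<exists>v. reval (Cn cf [Cn cp [Pj 0, Pj 1]]) [m, x] (Suc v)"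
    proof (intro allI impI)
      fix m assume "m < (LEAST n. f (prod_encode (n, x)) = 0)"
      then have "f (prod_encode (m, x)) \<noteq> 0" using not_less_Least by blast
      then obtain v where "f (prod_encode (m, x)) = Suc v" using not0_implies_Suc by blast
      then show "\<exists>v. reval (Cn cf [Cn cp [Pj 0, Pj 1]]) [m, x] (Suc v)" using c2 by metis
    qed
  qed
  then show ?thesis unfolding recursive1_def by blast
qed


lemma rec2_fst[intro]: "rec2 (\<lambda>n x. n)"
  unfolding rec2_def using reval_Pj0 by blast
lemma rec2_snd[intro]: "rec2 (\<lambda>n x. x)"
  unfolding rec2_def using reval_Pj1 by blast
lemma rec2_const[intro]: "rec2 (\<lambda>n x. k)"
  unfolding rec2_def using reval_constc by blast
lemma rec2_app1: "recursive1 f \<Longrightarrow> rec2 a \<Longrightarrow> rec2 (\<lambda>n x. f (a n x))"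
proof -
  assume "recursive1 f" "rec2 a"
  then obtain cf ca where h1: "\<And>x. reval cf [x] (f x)" and h2: "\<And>n x. reval ca [n, x] (a n x)"
    unfolding recursive1_def rec2_def by blast
  have "reval (Cn cf [ca]) [n, x] (f (a n x))" for n x by (rule reval_Cn1[OF h2 h1])
  then show ?thesis unfolding rec2_def by blast
qed
lemma rec2_app2: "rec2 F \<Longrightarrow> rec2 a \<Longrightarrow> rec2 b \<Longrightarrow> rec2 (\<lambda>n x. F (a n x) (b n x))"
proof -
  assume "rec2 F" "rec2 a" "rec2 b"
  then obtain cf ca cb where h1: "\<And>n x. reval cf [n, x] (F n x)" and h2: "\<And>n x. reval ca [n, x] (a n x)"
    and h3: "\<And>n x. reval cb [n, x] (b n x)"
    unfolding rec2_def by blast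
  have "reval (Cn cf [ca, cb]) [n, x] (F (a n x) (b n x))" for n x by (rule reval_Cn2[OF h2 h3 h1])
  then show ?thesis unfolding rec2_def by blast
qed

lemma rec2_Suc[intro]: "rec2 a \<Longrightarrow> rec2 (\<lambda>n x. Suc (a n x))"
  using rec2_app1[of Suc a] rec1_Suc[OF rec1_id] by simp
lemma rec2_add'[intro]: "rec2 a \<Longrightarrow> rec2 b \<Longrightarrow> rec2 (\<lambda>n x. a n x + b n x)"
  using rec2_app2[OF rec2_add] .
lemma rec2_monus'[intro]: "rec2 a \<Longrightarrow> rec2 b \<Longrightarrow> rec2 (\<lambda>n x. a n x - b n x)"
  using rec2_app2[OF rec2_monus] .
lemma rec2_triangle[intro]: "rec2 a \<Longrightarrow> rec2 (\<lambda>n x. triangle (a n x))"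
  using rec2_app1[OF rec1_triangle[OF rec1_id]] .

lemma rec1_mu2:
  assumes "rec2 F" "\<And>x. \<exists>n. F n x = 0"
  shows "recursive1 (\<lambda>x. LEAST n. F n x = 0)"
proof -
  obtain cf where cf: "\<And>n x. reval cf [n, x] (F n x)" using assms(1) unfolding rec2_def by blast
  have "reval (Mn cf) [x] (LEAST n. F n x = 0)" for x
  proof (rule reval.mu)
    show "reval cf [LEAST n. F n x = 0, x] 0"
      using cf LeastI_ex[OF assms(2)[of x]] by metis
    show "\<forall>m<(LEAST n. F n x = 0). \<exists>v. reval cf [m, x] (Suc v)"
    proof (intro allI impI)
      fix m assume "m < (LEAST n. F n x = 0)"
      then have "F m x \<noteq> 0" using not_less_Least by blast
      then obtain v where "F m x = Suc v" using not0_implies_Suc by blast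
      then show "\<exists>v. reval cf [m, x] (Suc v)" using cf by metis
    qed
  qed
  then show ?thesis unfolding recursive1_def by blast
qed

lemma rec1_if0[intro]:
  assumes "recursive1 t" "recursive1 a" "recursive1 b"
  shows "recursive1 (\<lambda>x. if t x = 0 then a x else b x)"
proof -
  have "(\<lambda>x. if t x = 0 then a x else b x) = (\<lambda>x. a x * (1 - t x) + b x * (1 - (1 - t x)))"
    by auto
  moreover have "recursive1 (\<lambda>x. a x * (1 - t x) + b x * (1 - (1 - t x)))"
    using assms by (intro rec1_add rec1_mult rec1_monus rec1_const)
  ultimately show ?thesis by simp
qed

lemma rec1_ifle[intro]:
  assumes "recursive1 u" "recursive1 v" "recursive1 a" "recursive1 b"
  shows "recursive1 (\<lambda>x. if u x \<le> v x then a x else b x)"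
proof -
  have "(\<lambda>x. if u x - v x = 0 then a x else b x) = (\<lambda>x. if u x \<le> v x then a x else b x)"
    by auto
  moreover have "recursive1 (\<lambda>x. if u x - v x = 0 then a x else b x)"
    using assms by (intro rec1_if0 rec1_monus)
  ultimately show ?thesis by metis
qed

lemma rec1_ifeq[intro]:
  assumes "recursive1 u" "recursive1 v" "recursive1 a" "recursive1 b"
  shows "recursive1 (\<lambda>x. if u x = v x then a x else b x)"
proof -
  have "(\<lambda>x. if (u x - v x) + (v x - u x) = 0 then a x else b x) = (\<lambda>x. if u x = v x then a x else b x)"
    by auto
  moreover have "recursive1 (\<lambda>x. if (u x - v x) + (v x - u x) = 0 then a x else b x)"
    using assms by (intro rec1_if0 rec1_monus rec1_add)
  ultimately show ?thesis by metis
qed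

section \<open>Decoding pairs\<close>

definition tri_idx :: "nat \<Rightarrow> nat" where
  "tri_idx x = (LEAST k. Suc x - triangle (Suc k) = 0)"

lemma tri_mono: "k \<le> l \<Longrightarrow> triangle k \<le> triangle l"
  by (induction l) (auto simp: le_Suc_eq)

lemma triangle_ge: "k \<le> triangle k"
  by (induction k) auto

lemma tri_idx_ex: "\<exists>k. Suc x - triangle (Suc k) = 0"
  using triangle_ge[of "Suc x"] by (intro exI[of _ x]) auto

lemma tri_idx_prop: "x < triangle (Suc (tri_idx x))" "triangle (tri_idx x) \<le> x"
proof -
  show "x < triangle (Suc (tri_idx x))"
    using LeastI_ex[OF tri_idx_ex[of x]] unfolding tri_idx_def by auto
  show "triangle (tri_idx x) \<le> x"
  proof (cases "tri_idx x")
    case 0 then show ?thesis by simp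
  next
    case (Suc k)
    then have "k < tri_idx x" by simp
    then have "Suc x - triangle (Suc k) \<noteq> 0" unfolding tri_idx_def by (rule not_less_Least)
    then show ?thesis using Suc by simp
  qed
qed

lemma prod_decode_tri: "prod_decode x = (x - triangle (tri_idx x), tri_idx x - (x - triangle (tri_idx x)))"
proof -
  let ?k = "tri_idx x" let ?m = "x - triangle ?k"
  have m: "?m \<le> ?k" using tri_idx_prop[of x] by simp
  have "prod_encode (?m, ?k - ?m) = x"
    using m tri_idx_prop(2)[of x] by (simp add: prod_encode_def)
  then show ?thesis by (metis prod_encode_inverse)
qed

lemma rec1_tri_idx: "recursive1 tri_idx"
  unfolding tri_idx_def[abs_def]
  by (rule rec1_mu2[OF _ tri_idx_ex]) (intro rec2_monus' rec2_Suc rec2_snd rec2_triangle rec2_fst)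

definition fstd :: "nat \<Rightarrow> nat" where "fstd x = fst (prod_decode x)"
definition sndd :: "nat \<Rightarrow> nat" where "sndd x = snd (prod_decode x)"

lemma fstd_pe[simp]: "fstd (prod_encode (a, b)) = a" by (simp add: fstd_def)
lemma sndd_pe[simp]: "sndd (prod_encode (a, b)) = b" by (simp add: sndd_def)

lemma rec1_fstd0: "recursive1 fstd"
proof -
  have "fstd = (\<lambda>x. x - triangle (tri_idx x))"
    by (rule ext) (simp add: fstd_def prod_decode_tri)
  moreover have "recursive1 (\<lambda>x. x - triangle (tri_idx x))"
    using rec1_tri_idx by (intro rec1_monus rec1_id rec1_triangle)
  ultimately show ?thesis by simp
qed

lemma rec1_sndd0: "recursive1 sndd"
proof -
  have "sndd = (\<lambda>x. tri_idx x - (x - triangle (tri_idx x)))"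
    by (rule ext) (simp add: sndd_def prod_decode_tri)
  moreover have "recursive1 (\<lambda>x. tri_idx x - (x - triangle (tri_idx x)))"
    using rec1_tri_idx by (intro rec1_monus rec1_id rec1_triangle)
  ultimately show ?thesis by simp
qed

lemma rec1_fstd[intro]: "recursive1 a \<Longrightarrow> recursive1 (\<lambda>x. fstd (a x))"
  using rec1_comp[OF rec1_fstd0] .
lemma rec1_sndd[intro]: "recursive1 a \<Longrightarrow> recursive1 (\<lambda>x. sndd (a x))"
  using rec1_comp[OF rec1_sndd0] .

lemma rec1_natrec'[intro]:
  assumes "recursive1 f" "recursive1 g" "recursive1 a" "recursive1 b"
  shows "recursive1 (\<lambda>z. rec_nat (f (b z)) (\<lambda>k r. g (prod_encode (k, prod_encode (r, b z)))) (a z))"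
  using rec1_natrec[OF assms] .

lemma rec1_natrec_gen:
  assumes "recursive1 f" "recursive1 (\<lambda>y. G (fstd y) (fstd (sndd y)) (sndd (sndd y)))" "recursive1 a" "recursive1 b"
  shows "recursive1 (\<lambda>z. rec_nat (f (b z)) (\<lambda>k r. G k r (b z)) (a z))"
  using rec1_natrec[OF assms] by simp

lemma rec2_natrec_gen:
  assumes "recursive1 f" "recursive1 (\<lambda>y. G (fstd y) (fstd (sndd y)) (sndd (sndd y)))"
  shows "rec2 (\<lambda>n x. rec_nat (f x) (\<lambda>k r. G k r x) n)"
  using rec2_natrec[OF assms] by simp


definition hdc :: "nat \<Rightarrow> nat" where "hdc c = fstd (c - 1)"
definition tlc :: "nat \<Rightarrow> nat" where "tlc c = sndd (c - 1)"
definition dropc :: "nat \<Rightarrow> nat \<Rightarrow> nat" where "dropc n c = rec_nat c (\<lambda>k r. tlc r) n"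
definition lenc :: "nat \<Rightarrow> nat" where "lenc c = (LEAST n. dropc n c = 0)"
definition nthc :: "nat \<Rightarrow> nat \<Rightarrow> nat" where "nthc c k = hdc (dropc k c)"
definition revstep :: "nat \<Rightarrow> nat" where
  "revstep r = prod_encode (tlc (fstd r), Suc (prod_encode (hdc (fstd r), sndd r)))"
definition revc :: "nat \<Rightarrow> nat" where
  "revc c = sndd (rec_nat (prod_encode (c, 0)) (\<lambda>k r. revstep r) (lenc c))"
definition takec :: "nat \<Rightarrow> nat \<Rightarrow> nat" where
  "takec k c = revc (dropc (lenc c - k) (revc c))"

lemma rec1_hdc[intro]: "recursive1 a \<Longrightarrow> recursive1 (\<lambda>x. hdc (a x))"
  unfolding hdc_def by (intro rec1_fstd rec1_monus rec1_const)
lemma rec1_tlc[intro]: "recursive1 a \<Longrightarrow> recursive1 (\<lambda>x. tlc (a x))"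
  unfolding tlc_def by (intro rec1_sndd rec1_monus rec1_const)

lemma rec2_dropc: "rec2 dropc"
proof -
  have "rec2 (\<lambda>n x. rec_nat ((\<lambda>x. x) x) (\<lambda>k r. (\<lambda>k r x. tlc r) k r x) n)"
    by (rule rec2_natrec_gen[where f="\<lambda>x. x" and G="\<lambda>k r x. tlc r"]) (intro rec1_tlc rec1_fstd rec1_sndd rec1_id)+
  then show ?thesis unfolding dropc_def[abs_def] by simp
qed

lemma rec1_dropc[intro]: "recursive1 a \<Longrightarrow> recursive1 b \<Longrightarrow> recursive1 (\<lambda>x. dropc (a x) (b x))"
  using rec1_app2[OF rec2_dropc] .

lemma rec1_revstep[intro]: "recursive1 a \<Longrightarrow> recursive1 (\<lambda>x. revstep (a x))"
  unfolding revstep_def by (intro rec1_pe rec1_tlc rec1_fstd rec1_Suc rec1_hdc rec1_sndd)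

section \<open>Semantics on situation codes\<close>

lemma enc_sit_Nil[simp]: "enc_sit [] = 0" by (simp add: enc_sit_def)
lemma enc_sit_Cons[simp]: "enc_sit (b # s) = Suc (prod_encode (of_bool b, enc_sit s))"
  by (simp add: enc_sit_def)
lemma enc_sit_eq_iff[simp]: "enc_sit s = enc_sit t \<longleftrightarrow> s = t"
proof
  assume "enc_sit s = enc_sit t"
  then have "map of_bool s = (map of_bool t :: nat list)" by (simp add: enc_sit_def list_encode_eq)
  moreover have "inj (of_bool :: bool \<Rightarrow> nat)" by (auto simp: inj_def)
  ultimately show "s = t" by (simp add: inj_map_eq_map)
qed simp

lemma hdc_Suc[simp]: "hdc (Suc (prod_encode (a, b))) = a" by (simp add: hdc_def)
lemma tlc_Suc[simp]: "tlc (Suc (prod_encode (a, b))) = b" by (simp add: tlc_def)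
lemma hdc_Cons[simp]: "hdc (enc_sit (b # s)) = of_bool b" by (simp add: hdc_def)
lemma tlc_Cons[simp]: "tlc (enc_sit (b # s)) = enc_sit s" by (simp add: tlc_def)
lemma tlc_Nil[simp]: "tlc 0 = 0"
  by (simp add: tlc_def sndd_def prod_decode_def prod_decode_aux.simps)

lemma tlc_enc: "tlc (enc_sit s) = enc_sit (tl s)"
  by (cases s) auto

lemma dropc_enc[simp]: "dropc n (enc_sit s) = enc_sit (drop n s)"
  by (induction n) (auto simp: dropc_def tlc_enc drop_Suc tl_drop)

lemma lenc_enc[simp]: "lenc (enc_sit s) = length s"
proof -
  have "dropc n (enc_sit s) = 0 \<longleftrightarrow> length s \<le> n" for n
    using enc_sit_eq_iff[of "drop n s" "[]"] by simp
  then show ?thesis unfolding lenc_def by (auto intro!: Least_equality)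
qed

lemma rec1_lenc[intro]: "recursive1 a \<Longrightarrow> recursive1 (\<lambda>x. lenc (a x))"
proof -
  have "\<exists>n. dropc n c = 0" for c
  proof -
    obtain s where "c = list_encode s" by (metis list_decode_inverse)
    have "\<forall>s. (\<exists>n. dropc n (list_encode s) = 0)"
    proof
      fix s show "\<exists>n. dropc n (list_encode s) = 0"
      proof (induction s)
        case Nil then show ?case by (auto intro!: exI[of _ 0] simp: dropc_def)
      next
        case (Cons y ys)
        then obtain n where "dropc n (list_encode ys) = 0" by blast
        moreover have "dropc (Suc n) c' = dropc n (tlc c')" for c' 
          by (induction n) (auto simp: dropc_def)
        moreover have "tlc (list_encode (y # ys)) = list_encode ys" by (simp add: tlc_def)
        ultimately show ?case by metis
      qed
    qed
    then show ?thesis using \<open>c = list_encode s\<close> by blast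
  qed
  then have "recursive1 lenc" unfolding lenc_def[abs_def]
    by (intro rec1_mu2 rec2_dropc)
  then show "recursive1 a \<Longrightarrow> recursive1 (\<lambda>x. lenc (a x))" using rec1_comp by blast
qed

lemma nthc_enc[simp]: "k < length s \<Longrightarrow> nthc (enc_sit s) k = of_bool (s ! k)"
  by (simp add: nthc_def Cons_nth_drop_Suc[symmetric])

lemma rec1_nthc[intro]: "recursive1 a \<Longrightarrow> recursive1 b \<Longrightarrow> recursive1 (\<lambda>x. nthc (a x) (b x))"
  unfolding nthc_def by (intro rec1_hdc rec1_dropc)

lemma revc_enc[simp]: "revc (enc_sit s) = enc_sit (rev s)"
proof -
  have inv: "j \<le> length s \<Longrightarrow> rec_nat (prod_encode (enc_sit s, 0)) (\<lambda>k r. revstep r) j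
      = prod_encode (enc_sit (drop j s), enc_sit (rev (take j s)))" for j
  proof (induction j)
    case 0 then show ?case by simp
  next
    case (Suc j)
    then have "j < length s" by simp
    then have d: "drop j s = s ! j # drop (Suc j) s" by (simp add: Cons_nth_drop_Suc)
    have "take (Suc j) s = take j s @ [s ! j]" using \<open>j < length s\<close> by (simp add: take_Suc_conv_app_nth)
    then show ?case using Suc d by (simp add: revstep_def)
  qed
  show ?thesis unfolding revc_def using inv[of "length s"] by simp
qed

lemma rec1_revc[intro]: "recursive1 a \<Longrightarrow> recursive1 (\<lambda>x. revc (a x))"
proof -
  have "recursive1 (\<lambda>c. rec_nat ((\<lambda>c. prod_encode (c, 0)) c) (\<lambda>k r. (\<lambda>k r c. revstep r) k r c) (lenc c))"
    by (rule rec1_natrec_gen[where f="\<lambda>c. prod_encode (c, 0)" and b="\<lambda>c. c" and a=lenc and G="\<lambda>k r c. revstep r"]) (intro rec1_revstep rec1_fstd rec1_sndd rec1_pe rec1_id rec1_lenc rec1_const)+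
  then have "recursive1 revc" unfolding revc_def[abs_def] by (intro rec1_sndd)
  then show "recursive1 a \<Longrightarrow> recursive1 (\<lambda>x. revc (a x))" using rec1_comp by blast
qed

lemma takec_enc[simp]: "k \<le> length s \<Longrightarrow> takec k (enc_sit s) = enc_sit (take k s)"
  by (simp add: takec_def rev_drop)

lemma rec1_takec[intro]: "recursive1 a \<Longrightarrow> recursive1 b \<Longrightarrow> recursive1 (\<lambda>x. takec (a x) (b x))"
  unfolding takec_def by (intro rec1_revc rec1_dropc rec1_monus rec1_lenc)


section \<open>The filtering map\<close>

definition keep :: "nat \<Rightarrow> (bool list \<Rightarrow> bool) \<Rightarrow> nat \<Rightarrow> bool list \<Rightarrow> bool" where
  "keep N G k s \<longleftrightarrow> k < N \<or> G (take k s)"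

definition hf :: "nat \<Rightarrow> (bool list \<Rightarrow> bool) \<Rightarrow> bool list \<Rightarrow> bool list" where
  "hf N G s = map (nth s) (filter (\<lambda>k. keep N G k s) [0..<length s])"

lemma hf_snoc: "hf N G (s @ [x]) = hf N G s @ (if length s < N \<or> G s then [x] else [])"
proof -
  have k: "k < length s \<Longrightarrow> keep N G k (s @ [x]) = keep N G k s" for k
    by (simp add: keep_def)
  have "filter (\<lambda>k. keep N G k (s @ [x])) [0..<length s] = filter (\<lambda>k. keep N G k s) [0..<length s]"
    by (rule filter_cong) (auto simp: k)
  moreover have "map (nth (s @ [x])) (filter (\<lambda>k. keep N G k s) [0..<length s])
      = map (nth s) (filter (\<lambda>k. keep N G k s) [0..<length s])"
    by (auto simp: nth_append)
  moreover have "keep N G (length s) (s @ [x]) = (length s < N \<or> G s)" by (simp add: keep_def)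
  ultimately show ?thesis by (simp add: hf_def)
qed

lemma hf_Nil[simp]: "hf N G [] = []" by (simp add: hf_def)

lemma hf_id: "(\<And>k. k < length s \<Longrightarrow> keep N G k s) \<Longrightarrow> hf N G s = s"
proof -
  assume "\<And>k. k < length s \<Longrightarrow> keep N G k s"
  then have "filter (\<lambda>k. keep N G k s) [0..<length s] = [0..<length s]" by (auto intro: filter_True)
  then show ?thesis by (simp add: hf_def map_nth)
qed

lemma hf_short: "length s \<le> N \<Longrightarrow> hf N G s = s"
  by (rule hf_id) (auto simp: keep_def)

definition hstep :: "nat \<Rightarrow> (nat \<Rightarrow> nat) \<Rightarrow> nat \<Rightarrow> nat \<Rightarrow> nat \<Rightarrow> nat" where
  "hstep N g j r c = (if N \<le> lenc c - 1 - j then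
       (if g (takec (lenc c - 1 - j) c) = 0 then Suc (prod_encode (nthc c (lenc c - 1 - j), r)) else r)
     else Suc (prod_encode (nthc c (lenc c - 1 - j), r)))"

definition hcode :: "nat \<Rightarrow> (nat \<Rightarrow> nat) \<Rightarrow> nat \<Rightarrow> nat" where
  "hcode N g c = rec_nat 0 (\<lambda>j r. hstep N g j r c) (lenc c)"

lemma rec1_hcode:
  assumes "recursive1 g"
  shows "recursive1 (hcode N g)"
proof -
  have "recursive1 (\<lambda>c. rec_nat ((\<lambda>c. 0) c) (\<lambda>k r. (\<lambda>j r c. hstep N g j r c) k r c) (lenc c))"
  proof (rule rec1_natrec_gen[where f="\<lambda>c. 0" and b="\<lambda>c. c" and a=lenc and G="\<lambda>j r c. hstep N g j r c"])
    show "recursive1 (\<lambda>y. hstep N g (fstd y) (fstd (sndd y)) (sndd (sndd y)))"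
      unfolding hstep_def
      by (intro rec1_ifle rec1_ifeq rec1_Suc rec1_pe rec1_nthc rec1_monus rec1_lenc rec1_sndd rec1_fstd
          rec1_id rec1_const rec1_comp[OF assms] rec1_takec)
  qed (intro rec1_const rec1_id rec1_lenc)+
  then show ?thesis unfolding hcode_def[abs_def] by simp
qed

lemma hcode_enc: "hcode N g (enc_sit s) = enc_sit (hf N (\<lambda>p. g (enc_sit p) = 0) s)"
proof -
  let ?G = "\<lambda>p. g (enc_sit p) = 0"
  let ?L = "length s"
  have inv: "j \<le> ?L \<Longrightarrow> rec_nat 0 (\<lambda>j r. hstep N g j r (enc_sit s)) j
     = enc_sit (map (nth s) (filter (\<lambda>k. keep N ?G k s) [?L - j..<?L]))" for j
  proof (induction j)
    case 0 then show ?case by simp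
  next
    case (Suc j)
    then have j: "j < ?L" by simp
    have u: "[?L - Suc j..<?L] = (?L - 1 - j) # [?L - j..<?L]"
      using j by (metis Suc_diff_Suc diff_diff_left plus_1_eq_Suc upt_conv_Cons diff_less zero_less_Suc
          less_le_trans le_refl Suc_leI)
    have lt: "?L - 1 - j < ?L" using j by simp
    show ?case
      using Suc j lt by (simp add: u hstep_def keep_def not_le del: upt_Suc)
  qed
  show ?thesis using inv[of ?L] by (simp add: hcode_def hf_def)
qed


lemma rec1_div2_0: "recursive1 (\<lambda>a. a div 2)"
proof -
  have e: "(LEAST m. Suc a - Suc (Suc (m + m)) = 0) = a div 2" for a
    by (rule Least_equality) auto
  have "recursive1 (\<lambda>a. LEAST m. Suc a - Suc (Suc (m + m)) = 0)"
    by (rule rec1_mu2) (intro rec2_monus' rec2_Suc rec2_snd rec2_add' rec2_fst, presburger)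
  then show ?thesis using e by simp
qed

lemma rec1_div2[intro]: "recursive1 a \<Longrightarrow> recursive1 (\<lambda>x. a x div 2)"
  using rec1_comp[OF rec1_div2_0] .

lemma rat_code_alt: "rat_code v = real_of_int (int_decode (fstd v)) / real (Suc (sndd v))"
  by (simp add: rat_code_def fstd_def sndd_def split: prod.split)

lemma int_decode_alt: "int_decode a = (if even a then int (a div 2) else - int (a div 2) - 1)"
  by (simp add: int_decode_def sum_decode_def)

definition geqt :: "nat \<Rightarrow> nat \<Rightarrow> nat \<Rightarrow> nat" where
  "geqt P Q v = (if fstd v - 2 * (fstd v div 2) = 0 then
      (if P * Suc (sndd v) \<le> Q * (fstd v div 2) then 0 else 1) else 1)"

definition leqt :: "nat \<Rightarrow> nat \<Rightarrow> nat \<Rightarrow> nat" where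
  "leqt P Q v = (if fstd v - 2 * (fstd v div 2) = 0 then
      (if Q * (fstd v div 2) \<le> P * Suc (sndd v) then 0 else 1) else 0)"

lemma rec1_geqt: "recursive1 (geqt P Q)"
  unfolding geqt_def[abs_def]
  by (intro rec1_if0 rec1_ifle rec1_monus rec1_fstd rec1_sndd rec1_mult rec1_div2 rec1_Suc rec1_const rec1_id)

lemma rec1_leqt: "recursive1 (leqt P Q)"
  unfolding leqt_def[abs_def]
  by (intro rec1_if0 rec1_ifle rec1_monus rec1_fstd rec1_sndd rec1_mult rec1_div2 rec1_Suc rec1_const rec1_id)

lemma even_iff_monus: "(a - 2 * (a div 2) = 0) \<longleftrightarrow> even (a::nat)"
  by presburger

lemma geqt_iff: "Q > 0 \<Longrightarrow> geqt P Q v = 0 \<longleftrightarrow> rat_code v \<ge> real P / real Q"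
proof -
  assume Q: "Q > 0"
  let ?a = "fstd v" let ?b = "sndd v"
  show ?thesis
  proof (cases "even ?a")
    case True
    then have "rat_code v = real (?a div 2) / real (Suc ?b)"
      by (simp add: rat_code_alt int_decode_alt)
    moreover have "real P / real Q \<le> real (?a div 2) / real (Suc ?b) \<longleftrightarrow> P * Suc ?b \<le> Q * (?a div 2)"
    proof -
      have "real P / real Q \<le> real (?a div 2) / real (Suc ?b) \<longleftrightarrow> real P * real (Suc ?b) \<le> real (?a div 2) * real Q"
        using Q by (simp add: field_simps del: of_nat_Suc)
      moreover have "real P * real (Suc ?b) = real (P * Suc ?b)" "real (?a div 2) * real Q = real (Q * (?a div 2))"
        by (simp_all add: algebra_simps)
      ultimately show ?thesis by (simp only: of_nat_le_iff)
    qed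
    ultimately show ?thesis using True by (simp add: geqt_def even_iff_monus)
  next
    case False
    then have "rat_code v < 0"
      by (simp add: rat_code_alt int_decode_alt divide_neg_pos)
    moreover have "fstd v - 2 * (fstd v div 2) \<noteq> 0" using False even_iff_monus by blast
    then have g: "geqt P Q v = 1" by (simp add: geqt_def)
    have h: "0 \<le> real P / real Q" by simp
    have "\<not> (real P / real Q \<le> rat_code v)" using \<open>rat_code v < 0\<close> h by linarith
    then show ?thesis using g by simp
  qed
qed

lemma leqt_iff: "Q > 0 \<Longrightarrow> leqt P Q v = 0 \<longleftrightarrow> rat_code v \<le> real P / real Q"
proof -
  assume Q: "Q > 0"
  let ?a = "fstd v" let ?b = "sndd v"
  show ?thesis
  proof (cases "even ?a")
    case True
    then have "rat_code v = real (?a div 2) / real (Suc ?b)"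
      by (simp add: rat_code_alt int_decode_alt)
    moreover have "real (?a div 2) / real (Suc ?b) \<le> real P / real Q \<longleftrightarrow> Q * (?a div 2) \<le> P * Suc ?b"
    proof -
      have "real (?a div 2) / real (Suc ?b) \<le> real P / real Q \<longleftrightarrow> real (?a div 2) * real Q \<le> real P * real (Suc ?b)"
        using Q by (simp add: field_simps del: of_nat_Suc)
      moreover have "real P * real (Suc ?b) = real (P * Suc ?b)" "real (?a div 2) * real Q = real (Q * (?a div 2))"
        by (simp_all add: algebra_simps)
      ultimately show ?thesis by (simp only: of_nat_le_iff)
    qed
    ultimately show ?thesis using True by (simp add: leqt_def even_iff_monus)
  next
    case False
    then have "rat_code v < 0"
      by (simp add: rat_code_alt int_decode_alt divide_neg_pos)
    moreover have "fstd v - 2 * (fstd v div 2) \<noteq> 0" using False even_iff_monus by blast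
    then have g: "leqt P Q v = 0" by (simp add: leqt_def)
    have h: "0 \<le> real P / real Q" by simp
    have "rat_code v \<le> real P / real Q" using \<open>rat_code v < 0\<close> h by linarith
    then show ?thesis using g by simp
  qed
qed

definition ONE :: nat where "ONE = prod_encode (2, 0)"

lemma rat_code_ONE[simp]: "rat_code ONE = 1"
  by (simp add: ONE_def rat_code_def int_decode_def sum_decode_def)

definition scale :: "nat \<Rightarrow> nat \<Rightarrow> nat" where
  "scale M v = prod_encode (fstd v, M * sndd v + (M - 1))"

lemma rat_code_scale: "M > 0 \<Longrightarrow> rat_code (scale M v) = rat_code v / real M"
proof -
  assume M: "M > 0"
  have "real (Suc (M * sndd v + (M - 1))) = real M * real (Suc (sndd v))"
    using M by (cases M) (auto simp: algebra_simps)
  then show ?thesis by (simp add: rat_code_alt scale_def)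
qed

lemma rec1_scale[intro]: "recursive1 a \<Longrightarrow> recursive1 (\<lambda>x. scale M (a x))"
  unfolding scale_def by (intro rec1_pe rec1_fstd rec1_add rec1_mult rec1_sndd rec1_const)


lemma fs_props:
  assumes "forecasting_system \<phi>"
  shows "\<phi> s = {lowerF \<phi> s .. upperF \<phi> s}" "0 \<le> lowerF \<phi> s" "lowerF \<phi> s \<le> upperF \<phi> s"
    "upperF \<phi> s \<le> 1"
proof -
  obtain a b where ab: "0 \<le> a" "a \<le> b" "b \<le> 1" "\<phi> s = {a..b}"
    using assms unfolding forecasting_system_def by blast
  then have "lowerF \<phi> s = a" "upperF \<phi> s = b" by (simp_all add: lowerF_def upperF_def)
  then show "\<phi> s = {lowerF \<phi> s .. upperF \<phi> s}" "0 \<le> lowerF \<phi> s" "lowerF \<phi> s \<le> upperF \<phi> s"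
    "upperF \<phi> s \<le> 1" using ab by auto
qed

lemma upperE_le0_iff:
  fixes I :: "real set"
  assumes "I \<noteq> {}" "I \<subseteq> {0..1}"
  shows "upperE I g \<le> 0 \<longleftrightarrow> (\<forall>p\<in>I. p * g True + (1 - p) * g False \<le> 0)"
proof -
  have "bdd_above ((\<lambda>p. p * g True + (1 - p) * g False) ` I)"
  proof (rule bdd_aboveI2)
    fix p assume "p \<in> I" then have p: "0 \<le> p" "p \<le> 1" using assms by auto
    have "p * g True \<le> p * \<bar>g True\<bar>" using p by (intro mult_left_mono) auto
    also have "\<dots> \<le> \<bar>g True\<bar>" using p by (intro mult_left_le_one_le) auto
    finally have 1: "p * g True \<le> \<bar>g True\<bar>" .
    have "(1 - p) * g False \<le> (1 - p) * \<bar>g False\<bar>" using p by (intro mult_left_mono) auto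
    also have "\<dots> \<le> \<bar>g False\<bar>" using p by (intro mult_left_le_one_le) auto
    finally have 2: "(1 - p) * g False \<le> \<bar>g False\<bar>" .
    show "p * g True + (1 - p) * g False \<le> \<bar>g True\<bar> + \<bar>g False\<bar>" using 1 2 by linarith
  qed
  then show ?thesis unfolding upperE_def using assms(1) by (simp add: cSup_le_iff)
qed

lemma sm_iff:
  assumes "\<And>s. \<phi> s \<noteq> {}" "\<And>s. \<phi> s \<subseteq> {0..1}"
  shows "supermartingale \<phi> F \<longleftrightarrow>
    (\<forall>s. \<forall>p\<in>\<phi> s. p * (F (s @ [True]) - F s) + (1 - p) * (F (s @ [False]) - F s) \<le> 0)"
  unfolding supermartingale_def using upperE_le0_iff[OF assms] by simp

lemma pos_rat_between:
  fixes x y :: real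
  assumes "0 \<le> x" "x < y"
  shows "\<exists>P Q. Q > 0 \<and> x < real P / real Q \<and> real P / real Q < y"
proof -
  obtain r where r: "r \<in> \<rat>" "x < r" "r < y" using Rats_dense_in_real[OF assms(2)] by blast
  then obtain i n where i: "r = real_of_int i / real n" "n \<noteq> 0"
    unfolding Rats_eq_int_div_nat by blast
  have "i > 0" using r i assms(1) by (smt (verit) divide_nonpos_pos of_int_le_0_iff of_nat_0_less_iff
        gr0I)
  then have "real (nat i) = real_of_int i" by simp
  then show ?thesis using i r by (intro exI[of _ "nat i"] exI[of _ n]) auto
qed

lemma small_pow: "(e::real) > 0 \<Longrightarrow> \<exists>K. (1/2::real) ^ K < e"
  using real_arch_pow_inv[of e "1/2"] by auto

locale setting =
  fixes \<phi> :: "bool list \<Rightarrow> real set" and \<omega> :: "nat \<Rightarrow> bool" and e1 e2 :: real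
  assumes fs: "forecasting_system \<phi>" and e1: "e1 > 0" and e2: "e2 > 0"
begin

definition lo :: "nat \<Rightarrow> real" where "lo n = lowerF \<phi> (prefix \<omega> n)"
definition hi :: "nat \<Rightarrow> real" where "hi n = upperF \<phi> (prefix \<omega> n)"
definition L :: real where "L = real_of_ereal (liminf (\<lambda>n. ereal (lo n)))"
definition U :: real where "U = real_of_ereal (limsup (\<lambda>n. ereal (hi n)))"
definition I :: "real set" where "I = limit_interval \<phi> \<omega> e1 e2"

lemma liminf_lo: "liminf (\<lambda>n. ereal (lo n)) = ereal L" "0 \<le> L" "L \<le> 1"
proof -
  have a: "0 \<le> liminf (\<lambda>n. ereal (lo n))"
    by (rule Liminf_bounded) (auto simp: lo_def fs_props[OF fs])
  have "lo n \<le> 1" for n using fs_props[OF fs, of "prefix \<omega> n"] by (simp add: lo_def)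
  then have b: "liminf (\<lambda>n. ereal (lo n)) \<le> 1"
    by (intro Liminf_le) auto
  from a b show "liminf (\<lambda>n. ereal (lo n)) = ereal L" unfolding L_def
    by (cases "liminf (\<lambda>n. ereal (lo n))") auto
  with a b show "0 \<le> L" "L \<le> 1" by auto
qed

lemma limsup_hi: "limsup (\<lambda>n. ereal (hi n)) = ereal U" "0 \<le> U" "U \<le> 1"
proof -
  have "0 \<le> hi n" for n using fs_props[OF fs, of "prefix \<omega> n"] by (simp add: hi_def)
  then have a: "0 \<le> limsup (\<lambda>n. ereal (hi n))"
    by (intro le_Limsup) auto
  have b: "limsup (\<lambda>n. ereal (hi n)) \<le> 1"
    by (rule Limsup_bounded) (auto simp: hi_def fs_props[OF fs])
  from a b show "limsup (\<lambda>n. ereal (hi n)) = ereal U" unfolding U_def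
    by (cases "limsup (\<lambda>n. ereal (hi n))") auto
  with a b show "0 \<le> U" "U \<le> 1" by auto
qed

lemma L_le_U: "L \<le> U"
proof -
  have "liminf (\<lambda>n. ereal (lo n)) \<le> liminf (\<lambda>n. ereal (hi n))"
    by (rule Liminf_mono) (auto simp: lo_def hi_def fs_props[OF fs])
  also have "\<dots> \<le> limsup (\<lambda>n. ereal (hi n))" by (rule Liminf_le_Limsup) simp
  finally show ?thesis using liminf_lo limsup_hi by simp
qed

lemma I_eq: "I = {max (L - e1) 0 .. min (U + e2) 1}"
proof -
  have a: "real_of_ereal (liminf (\<lambda>n. ereal (lowerF \<phi> (prefix \<omega> n)))) = L" by (simp add: L_def lo_def)
  have b: "real_of_ereal (limsup (\<lambda>n. ereal (upperF \<phi> (prefix \<omega> n)))) = U" by (simp add: U_def hi_def)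
  show ?thesis unfolding I_def limit_interval_def a b by auto
qed

lemma I_props: "I \<noteq> {}" "I \<subseteq> {0..1}" "lowerF (\<lambda>s. I) s = max (L - e1) 0" "upperF (\<lambda>s. I) s = min (U + e2) 1"
proof -
  have le: "max (L - e1) 0 \<le> min (U + e2) 1" using liminf_lo limsup_hi L_le_U e1 e2 by auto
  show "I \<noteq> {}" "I \<subseteq> {0..1}" using le by (auto simp: I_eq)
  show "lowerF (\<lambda>s. I) s = max (L - e1) 0" "upperF (\<lambda>s. I) s = min (U + e2) 1"
    using le by (simp_all add: I_eq lowerF_def upperF_def)
qed

lemma ev_lo: "c < L \<Longrightarrow> \<exists>N. \<forall>n\<ge>N. c < lo n"
proof -
  assume "c < L"
  have "ereal L \<le> liminf (\<lambda>n. ereal (lo n))" using liminf_lo by simp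
  then have "\<forall>y<ereal L. eventually (\<lambda>n. y < ereal (lo n)) sequentially" by (simp only: le_Liminf_iff)
  moreover have "ereal c < ereal L" using \<open>c < L\<close> by simp
  ultimately have "eventually (\<lambda>n. ereal c < ereal (lo n)) sequentially" by blast
  then have "eventually (\<lambda>n. c < lo n) sequentially" by simp
  then show ?thesis by (simp add: eventually_sequentially)
qed

lemma ev_hi: "U < c \<Longrightarrow> \<exists>N. \<forall>n\<ge>N. hi n < c"
proof -
  assume "U < c"
  have "ereal U \<ge> limsup (\<lambda>n. ereal (hi n))" using limsup_hi by simp
  then have "\<forall>y>ereal U. eventually (\<lambda>n. y > ereal (hi n)) sequentially" by (simp only: Limsup_le_iff)
  moreover have "ereal U < ereal c" using \<open>U < c\<close> by simp
  ultimately have "eventually (\<lambda>n. ereal (hi n) < ereal c) sequentially" by blast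
  then have "eventually (\<lambda>n. hi n < c) sequentially" by simp
  then show ?thesis by (simp add: eventually_sequentially)
qed

lemma sub_I: "L - e1 \<le> lowerF \<phi> s \<Longrightarrow> upperF \<phi> s \<le> U + e2 \<Longrightarrow> \<phi> s \<subseteq> I"
  using fs_props[OF fs, of s] by (auto simp: I_eq)

end


context setting begin

lemma low_test:
  assumes "computable_fs \<phi>"
  shows "\<exists>lt. recursive1 lt \<and> (\<forall>s. lt (enc_sit s) = 0 \<longrightarrow> L - e1 \<le> lowerF \<phi> s)
     \<and> (\<exists>N. \<forall>n\<ge>N. lt (enc_sit (prefix \<omega> n)) = 0)"
proof (cases "L - e1 < 0")
  case True
  have "L - e1 \<le> lowerF \<phi> s" for s using True fs_props(2)[OF fs, of s] by linarith
  then show ?thesis by (intro exI[of _ "\<lambda>c. 0"]) auto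
next
  case False
  obtain ql where ql: "recursive1 ql"
    "\<And>d n. \<bar>lowerF \<phi> d - rat_code (ql (prod_encode (enc_sit d, n)))\<bar> < (1/2)^n"
    using assms unfolding computable_fs_def computable_on_def by blast
  obtain K where K: "(1/2::real)^K < e1/4" using small_pow[of "e1/4"] e1 by auto
  define \<delta> where "\<delta> = (1/2::real)^K"
  have dpos: "\<delta> > 0" by (simp add: \<delta>_def)
  have dK: "\<delta> < e1/4" using K by (simp add: \<delta>_def)
  have "0 \<le> L - e1 + \<delta>" "L - e1 + \<delta> < L - \<delta>" using False dK dpos by linarith+
  then obtain P Q where PQ: "Q > 0" "L - e1 + \<delta> < real P / real Q" "real P / real Q < L - \<delta>"
    using pos_rat_between by blast
  define lt where "lt c = geqt P Q (ql (prod_encode (c, K)))" for c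
  have r: "recursive1 lt" unfolding lt_def[abs_def]
    by (intro rec1_comp[OF rec1_geqt] rec1_comp[OF ql(1)] rec1_pe rec1_id rec1_const)
  have sem: "L - e1 \<le> lowerF \<phi> s" if "lt (enc_sit s) = 0" for s
  proof -
    have "rat_code (ql (prod_encode (enc_sit s, K))) \<ge> real P / real Q"
      using that geqt_iff[OF PQ(1)] by (simp add: lt_def)
    moreover have "\<bar>lowerF \<phi> s - rat_code (ql (prod_encode (enc_sit s, K)))\<bar> < \<delta>"
      using ql(2) by (simp add: \<delta>_def)
    ultimately show ?thesis using PQ by linarith
  qed
  obtain N where N: "\<And>n. n \<ge> N \<Longrightarrow> real P / real Q + \<delta> < lo n" using ev_lo[of "real P / real Q + \<delta>"] PQ by auto
  have "lt (enc_sit (prefix \<omega> n)) = 0" if "n \<ge> N" for n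
  proof -
    have "\<bar>lowerF \<phi> (prefix \<omega> n) - rat_code (ql (prod_encode (enc_sit (prefix \<omega> n), K)))\<bar> < \<delta>"
      using ql(2) by (simp add: \<delta>_def)
    then have "rat_code (ql (prod_encode (enc_sit (prefix \<omega> n), K))) \<ge> real P / real Q"
      using N[OF that] unfolding lo_def by linarith
    then show ?thesis using geqt_iff[OF PQ(1)] by (simp add: lt_def)
  qed
  then show ?thesis using r sem by blast
qed

lemma high_test:
  assumes "computable_fs \<phi>"
  shows "\<exists>ht. recursive1 ht \<and> (\<forall>s. ht (enc_sit s) = 0 \<longrightarrow> upperF \<phi> s \<le> U + e2)
     \<and> (\<exists>N. \<forall>n\<ge>N. ht (enc_sit (prefix \<omega> n)) = 0)"
proof (cases "U + e2 > 1")
  case True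
  have "upperF \<phi> s \<le> U + e2" for s using True fs_props(4)[OF fs, of s] by linarith
  then show ?thesis by (intro exI[of _ "\<lambda>c. 0"]) auto
next
  case False
  obtain qh where qh: "recursive1 qh"
    "\<And>d n. \<bar>upperF \<phi> d - rat_code (qh (prod_encode (enc_sit d, n)))\<bar> < (1/2)^n"
    using assms unfolding computable_fs_def computable_on_def by blast
  obtain K where K: "(1/2::real)^K < e2/4" using small_pow[of "e2/4"] e2 by auto
  define \<delta> where "\<delta> = (1/2::real)^K"
  have dpos: "\<delta> > 0" by (simp add: \<delta>_def)
  have dK: "\<delta> < e2/4" using K by (simp add: \<delta>_def)
  have "0 \<le> U + \<delta>" "U + \<delta> < U + e2 - \<delta>" using limsup_hi(2) dK dpos by linarith+
  then obtain P Q where PQ: "Q > 0" "U + \<delta> < real P / real Q" "real P / real Q < U + e2 - \<delta>"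
    using pos_rat_between by blast
  define ht where "ht c = leqt P Q (qh (prod_encode (c, K)))" for c
  have r: "recursive1 ht" unfolding ht_def[abs_def]
    by (intro rec1_comp[OF rec1_leqt] rec1_comp[OF qh(1)] rec1_pe rec1_id rec1_const)
  have sem: "upperF \<phi> s \<le> U + e2" if "ht (enc_sit s) = 0" for s
  proof -
    have "rat_code (qh (prod_encode (enc_sit s, K))) \<le> real P / real Q"
      using that leqt_iff[OF PQ(1)] by (simp add: ht_def)
    moreover have "\<bar>upperF \<phi> s - rat_code (qh (prod_encode (enc_sit s, K)))\<bar> < \<delta>"
      using qh(2) by (simp add: \<delta>_def)
    ultimately show ?thesis using PQ by linarith
  qed
  obtain N where N: "\<And>n. n \<ge> N \<Longrightarrow> hi n < real P / real Q - \<delta>" using ev_hi[of "real P / real Q - \<delta>"] PQ by auto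
  have "ht (enc_sit (prefix \<omega> n)) = 0" if "n \<ge> N" for n
  proof -
    have "\<bar>upperF \<phi> (prefix \<omega> n) - rat_code (qh (prod_encode (enc_sit (prefix \<omega> n), K)))\<bar> < \<delta>"
      using qh(2) by (simp add: \<delta>_def)
    then have "rat_code (qh (prod_encode (enc_sit (prefix \<omega> n), K))) \<le> real P / real Q"
      using N[OF that] unfolding hi_def by linarith
    then show ?thesis using leqt_iff[OF PQ(1)] by (simp add: ht_def)
  qed
  then show ?thesis using r sem by blast
qed

lemma good_exists:
  assumes "computable_fs \<phi>"
  shows "\<exists>G N. N \<ge> 1 \<and> recursive1 G \<and> (\<forall>s. G (enc_sit s) = 0 \<longrightarrow> \<phi> s \<subseteq> I)
     \<and> (\<forall>n\<ge>N. G (enc_sit (prefix \<omega> n)) = 0)"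
proof -
  obtain lt N1 where lt: "recursive1 lt" "\<And>s. lt (enc_sit s) = 0 \<Longrightarrow> L - e1 \<le> lowerF \<phi> s"
    "\<And>n. n \<ge> N1 \<Longrightarrow> lt (enc_sit (prefix \<omega> n)) = 0"
    using low_test[OF assms] by blast
  obtain ht N2 where ht: "recursive1 ht" "\<And>s. ht (enc_sit s) = 0 \<Longrightarrow> upperF \<phi> s \<le> U + e2"
    "\<And>n. n \<ge> N2 \<Longrightarrow> ht (enc_sit (prefix \<omega> n)) = 0"
    using high_test[OF assms] by blast
  have "recursive1 (\<lambda>c. lt c + ht c)" using lt(1) ht(1) by (intro rec1_add)
  moreover have "\<phi> s \<subseteq> I" if "lt (enc_sit s) + ht (enc_sit s) = 0" for s
    using that lt(2) ht(2) sub_I by simp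
  moreover have "lt (enc_sit (prefix \<omega> n)) + ht (enc_sit (prefix \<omega> n)) = 0" if "n \<ge> Suc (max N1 N2)" for n
    using that lt(3) ht(3) by simp
  ultimately show ?thesis by (intro exI[of _ "\<lambda>c. lt c + ht c"] exI[of _ "Suc (max N1 N2)"]) auto
qed

end


lemma take_prefix: "k \<le> n \<Longrightarrow> take k (prefix \<omega> n) = prefix \<omega> k"
  by (simp add: prefix_def take_map)

lemma length_prefix[simp]: "length (prefix \<omega> n) = n"
  by (simp add: prefix_def)

lemma prefix_Suc: "prefix \<omega> (Suc n) = prefix \<omega> n @ [\<omega> n]"
  by (simp add: prefix_def)

lemma mult_proc_snoc: "mult_proc D (s @ [x]) = mult_proc D s * D s x"
proof -
  have "mult_proc D (s @ [x]) = (\<Prod>k<Suc (length s). D (take k (s @ [x])) ((s @ [x]) ! k))"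
    by (simp add: mult_proc_def)
  also have "\<dots> = (\<Prod>k<length s. D (take k (s @ [x])) ((s @ [x]) ! k)) * D s x"
    by (simp add: prod.lessThan_Suc)
  also have "(\<Prod>k<length s. D (take k (s @ [x])) ((s @ [x]) ! k)) = mult_proc D s"
    unfolding mult_proc_def by (rule prod.cong) (auto simp: nth_append)
  finally show ?thesis .
qed

lemma mult_proc_Nil[simp]: "mult_proc D [] = 1" by (simp add: mult_proc_def)

lemma unbounded_iff_frequently:
  "unbounded_on T \<omega> \<longleftrightarrow> limsup (\<lambda>n. ereal (T (prefix \<omega> n))) = \<infinity>"
  by (simp add: unbounded_on_def)

lemma rec1_mem:
  assumes "finite F"
  shows "recursive1 (\<lambda>v. if v \<in> F then 0 else (1::nat))"
  using assms
proof (induction F rule: finite_induct)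
  case empty then show ?case by (simp add: rec1_const)
next
  case (insert a F)
  have "recursive1 (\<lambda>v. if v = a then 0 else (if v \<in> F then 0 else (1::nat)))"
    using insert.IH by (intro rec1_ifeq rec1_id rec1_const)
  moreover have "(\<lambda>v. if v = a then 0 else (if v \<in> F then 0 else (1::nat))) = (\<lambda>v. if v \<in> insert a F then 0 else 1)"
    by auto
  ultimately show ?case by simp
qed

locale good = setting +
  fixes G :: "nat \<Rightarrow> nat" and N :: nat
  assumes N1: "N \<ge> 1" and Grec: "recursive1 G" and Gsub: "\<And>s. G (enc_sit s) = 0 \<Longrightarrow> \<phi> s \<subseteq> I"
    and Gev: "\<And>n. n \<ge> N \<Longrightarrow> G (enc_sit (prefix \<omega> n)) = 0"
begin

definition Gs :: "bool list \<Rightarrow> bool" where "Gs p \<longleftrightarrow> G (enc_sit p) = 0"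
definition h :: "bool list \<Rightarrow> bool list" where "h = hf N Gs"

lemma h_snoc: "h (s @ [x]) = h s @ (if length s < N \<or> Gs s then [x] else [])"
  unfolding h_def by (rule hf_snoc)

lemma h_short: "length s \<le> N \<Longrightarrow> h s = s"
  unfolding h_def by (rule hf_short)

lemma h_prefix: "h (prefix \<omega> n) = prefix \<omega> n"
  unfolding h_def
proof (rule hf_id)
  fix k assume k: "k < length (prefix \<omega> n)"
  show "keep N Gs k (prefix \<omega> n)"
  proof (cases "k < N")
    case False
    then have "Gs (prefix \<omega> k)" using Gev[of k] by (simp add: Gs_def)
    then show ?thesis using k by (simp add: keep_def take_prefix)
  qed (simp add: keep_def)
qed

lemma hcode_h: "hcode N G (enc_sit s) = enc_sit (h s)"
  unfolding h_def Gs_def[abs_def] by (rule hcode_enc)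

lemma phi_ne: "\<phi> s \<noteq> {}" "\<phi> s \<subseteq> {0..1}"
  using fs_props[OF fs, of s] by auto

lemma sm_phi: "supermartingale \<phi> F \<longleftrightarrow>
    (\<forall>s. \<forall>p\<in>\<phi> s. p * (F (s @ [True]) - F s) + (1 - p) * (F (s @ [False]) - F s) \<le> 0)"
  by (rule sm_iff) (use phi_ne in auto)

lemma sm_I: "supermartingale (\<lambda>s. I) F \<longleftrightarrow>
    (\<forall>s. \<forall>p\<in>I. p * (F (s @ [True]) - F s) + (1 - p) * (F (s @ [False]) - F s) \<le> 0)"
  using sm_iff[of "\<lambda>s. I" F] I_props by auto

definition TA :: "(bool list \<Rightarrow> real) \<Rightarrow> nat \<Rightarrow> bool list \<Rightarrow> real" where
  "TA T M s = (if length s < N then 1 else T (h s) / real M)"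

lemma TA_test:
  assumes T: "test_supermartingale (\<lambda>s. I) T" and M: "M \<ge> 1" and TM: "\<And>u. length u = N \<Longrightarrow> T u \<le> real M"
  shows "test_supermartingale \<phi> (TA T M)"
proof -
  have Tsm: "\<And>s p. p \<in> I \<Longrightarrow> p * (T (s @ [True]) - T s) + (1 - p) * (T (s @ [False]) - T s) \<le> 0"
    using T unfolding test_supermartingale_def sm_I by blast
  have Tnn: "\<And>s. T s \<ge> 0" using T unfolding test_supermartingale_def by blast
  have Mpos: "real M > 0" using M by simp
  have "p * (TA T M (s @ [True]) - TA T M s) + (1 - p) * (TA T M (s @ [False]) - TA T M s) \<le> 0"
    if p: "p \<in> \<phi> s" for s p
  proof -
    have p01: "0 \<le> p" "p \<le> 1" using p phi_ne(2)[of s] by auto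
    consider "Suc (length s) < N" | "Suc (length s) = N" | "N \<le> length s" by linarith
    then show ?thesis
    proof cases
      case 1 then show ?thesis by (simp add: TA_def)
    next
      case 2
      have "TA T M (s @ [x]) - TA T M s \<le> 0" for x
      proof -
        have "h (s @ [x]) = s @ [x]" using 2 by (intro h_short) simp
        then have "TA T M (s @ [x]) = T (s @ [x]) / real M" using 2 by (simp add: TA_def)
        also have "\<dots> \<le> 1" using TM[of "s @ [x]"] 2 Mpos by simp
        finally show ?thesis using 2 by (simp add: TA_def)
      qed
      then have "p * (TA T M (s @ [True]) - TA T M s) \<le> 0" "(1 - p) * (TA T M (s @ [False]) - TA T M s) \<le> 0"
        using p01 by (auto intro: mult_nonneg_nonpos)
      then show ?thesis by linarith
    next
      case 3
      show ?thesis
      proof (cases "Gs s")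
        case True
        then have pI: "p \<in> I" using Gsub[of s] p by (auto simp: Gs_def)
        have e: "TA T M (s @ [x]) = T (h s @ [x]) / real M" for x
          using 3 True by (simp add: TA_def h_snoc)
        have e2: "TA T M s = T (h s) / real M" using 3 by (simp add: TA_def)
        have "p * (TA T M (s @ [True]) - TA T M s) + (1 - p) * (TA T M (s @ [False]) - TA T M s)
          = (p * (T (h s @ [True]) - T (h s)) + (1 - p) * (T (h s @ [False]) - T (h s))) / real M"
          unfolding e e2 using Mpos by (simp add: field_simps)
        also have "\<dots> \<le> 0" using Tsm[OF pI, of "h s"] Mpos by (simp add: divide_nonpos_pos)
        finally show ?thesis .
      next
        case False
        then have "TA T M (s @ [x]) = TA T M s" for x using 3 by (simp add: TA_def h_snoc)
        then show ?thesis by simp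
      qed
    qed
  qed
  moreover have "TA T M s \<ge> 0" for s using Tnn Mpos by (simp add: TA_def)
  moreover have "TA T M [] = 1" using N1 by (simp add: TA_def)
  ultimately show ?thesis unfolding test_supermartingale_def sm_phi by blast
qed

lemma TA_prefix: "n \<ge> N \<Longrightarrow> TA T M (prefix \<omega> n) = T (prefix \<omega> n) / real M"
  by (simp add: TA_def h_prefix)

definition qA :: "(nat \<Rightarrow> nat) \<Rightarrow> nat \<Rightarrow> nat \<Rightarrow> nat" where
  "qA q M x = (if N \<le> lenc (fstd x) then scale M (q (prod_encode (hcode N G (fstd x), sndd x))) else ONE)"

lemma qA_rec: "recursive1 q \<Longrightarrow> recursive1 (qA q M)"
proof -
  assume q: "recursive1 q"
  have f: "recursive1 (\<lambda>x. fstd x)" by (rule rec1_fstd[OF rec1_id])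
  have sn: "recursive1 (\<lambda>x. sndd x)" by (rule rec1_sndd[OF rec1_id])
  have hc: "recursive1 (\<lambda>x. hcode N G (fstd x))" by (rule rec1_comp[OF rec1_hcode[OF Grec] f])
  have pe: "recursive1 (\<lambda>x. prod_encode (hcode N G (fstd x), sndd x))" by (rule rec1_pe[OF hc sn])
  have a: "recursive1 (\<lambda>x. scale M (q (prod_encode (hcode N G (fstd x), sndd x))))"
    by (rule rec1_scale[OF rec1_comp[OF q pe]])
  have l: "recursive1 (\<lambda>x. lenc (fstd x))" by (rule rec1_lenc[OF f])
  show ?thesis unfolding qA_def[abs_def] by (rule rec1_ifle[OF rec1_const l a rec1_const])
qed

lemma qA_val: "M \<ge> 1 \<Longrightarrow> rat_code (qA q M (prod_encode (enc_sit s, n))) =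
   (if N \<le> length s then rat_code (q (prod_encode (enc_sit (h s), n))) / real M else 1)"
  by (simp add: qA_def hcode_h rat_code_scale)

lemma TA_computable:
  assumes "computable_on enc_sit T" "M \<ge> 1"
  shows "computable_on enc_sit (TA T M)"
proof -
  obtain q where q: "recursive1 q" "\<And>d n. \<bar>T d - rat_code (q (prod_encode (enc_sit d, n)))\<bar> < (1/2)^n"
    using assms(1) unfolding computable_on_def by blast
  have "\<bar>TA T M d - rat_code (qA q M (prod_encode (enc_sit d, n)))\<bar> < (1/2)^n" for d n
  proof (cases "N \<le> length d")
    case True
    have Mpos: "real M \<ge> 1" using assms(2) by simp
    have "\<bar>TA T M d - rat_code (qA q M (prod_encode (enc_sit d, n)))\<bar>
       = \<bar>T (h d) - rat_code (q (prod_encode (enc_sit (h d), n)))\<bar> / real M"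
      using True assms(2) by (simp add: qA_val TA_def diff_divide_distrib[symmetric])
    also have "\<dots> \<le> \<bar>T (h d) - rat_code (q (prod_encode (enc_sit (h d), n)))\<bar>"
      using divide_left_mono[of 1 "real M" "\<bar>T (h d) - rat_code (q (prod_encode (enc_sit (h d), n)))\<bar>"] Mpos
      by simp
    also have "\<dots> < (1/2)^n" by (rule q(2))
    finally show ?thesis .
  next
    case False then show ?thesis using assms(2) by (simp add: qA_val TA_def)
  qed
  then show ?thesis unfolding computable_on_def using qA_rec[OF q(1)] by blast
qed

lemma TA_lsc:
  assumes "lsc_on enc_sit T" "M \<ge> 1"
  shows "lsc_on enc_sit (TA T M)"
proof -
  obtain q where q: "recursive1 q"
    "\<And>d n. rat_code (q (prod_encode (enc_sit d, n))) \<le> rat_code (q (prod_encode (enc_sit d, Suc n)))"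
    "\<And>d. (\<lambda>n. rat_code (q (prod_encode (enc_sit d, n)))) \<longlonglongrightarrow> T d"
    using assms(1) unfolding lsc_on_def by blast
  have Mpos: "real M > 0" using assms(2) by simp
  have mono: "rat_code (qA q M (prod_encode (enc_sit d, n))) \<le> rat_code (qA q M (prod_encode (enc_sit d, Suc n)))"
    for d n using q(2)[of "h d" n] Mpos by (simp add: qA_val[OF assms(2)] divide_right_mono)
  have lim: "(\<lambda>n. rat_code (qA q M (prod_encode (enc_sit d, n)))) \<longlonglongrightarrow> TA T M d" for d
  proof (cases "N \<le> length d")
    case True
    then show ?thesis using tendsto_divide[OF q(3)[of "h d"] tendsto_const[of "real M"]] Mpos
      by (simp add: qA_val[OF assms(2)] TA_def)
  next
    case False then show ?thesis by (simp add: qA_val[OF assms(2)] TA_def)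
  qed
  show ?thesis unfolding lsc_on_def using qA_rec[OF q(1)] mono lim by blast
qed

lemma TA_unbounded:
  assumes "unbounded_on T \<omega>" "M \<ge> 1"
  shows "unbounded_on (TA T M) \<omega>"
proof -
  have "eventually (\<lambda>n. ereal (TA T M (prefix \<omega> n)) = ereal (T (prefix \<omega> n)) * ereal (1 / real M)) sequentially"
    unfolding eventually_sequentially by (intro exI[of _ N]) (simp add: TA_prefix)
  then have "limsup (\<lambda>n. ereal (TA T M (prefix \<omega> n))) = limsup (\<lambda>n. ereal (T (prefix \<omega> n)) * ereal (1 / real M))"
    by (rule Limsup_eq)
  also have "\<dots> = limsup (\<lambda>n. ereal (T (prefix \<omega> n))) * ereal (1 / real M)"
    by (rule limsup_ereal_mult_right) simp
  also have "\<dots> = \<infinity>" using assms by (simp add: unbounded_on_def)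
  finally show ?thesis by (simp add: unbounded_on_def)
qed

lemma M_exists: "\<exists>M::nat. M \<ge> 1 \<and> (\<forall>u. length u = N \<longrightarrow> (T :: bool list \<Rightarrow> real) u \<le> real M)"
proof -
  have fin: "finite {u :: bool list. length u = N}"
    using finite_lists_length_eq[of "UNIV :: bool set" N] by simp
  then have "bdd_above (T ` {u. length u = N})" by (intro bdd_above_finite finite_imageI) simp
  then obtain b where b: "\<And>u. length u = N \<Longrightarrow> T u \<le> b" by (auto simp: bdd_above_def)
  obtain M :: nat where "b < real M" using reals_Archimedean2 by blast
  then show ?thesis using b by (intro exI[of _ "Suc M"]) (auto, smt (verit))
qed

end


context good begin

definition Z :: "(bool list \<Rightarrow> bool \<Rightarrow> real) \<Rightarrow> bool list set" where
  "Z D = {u. length u = N \<and> mult_proc D u = 0}"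

definition DB :: "(bool list \<Rightarrow> bool \<Rightarrow> real) \<Rightarrow> bool list \<Rightarrow> bool \<Rightarrow> real" where
  "DB D p x = (if N \<le> length p \<and> take N p \<notin> Z D \<and> Gs p then D (h p) x else 1)"

lemma Z_finite: "finite (Z D)"
proof -
  have "finite {u :: bool list. length u = N}"
    using finite_lists_length_eq[of "UNIV :: bool set" N] by simp
  then show ?thesis unfolding Z_def by (rule rev_finite_subset) auto
qed

lemma DB_closed:
  "mult_proc (DB D) s = (if length s < N \<or> take N s \<in> Z D then 1
      else mult_proc D (h s) / mult_proc D (take N s))"
proof (induction s rule: rev_induct)
  case Nil then show ?case using N1 by simp
next
  case (snoc x s)
  have step: "mult_proc (DB D) (s @ [x]) = mult_proc (DB D) s * DB D s x" by (rule mult_proc_snoc)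
  consider "Suc (length s) < N" | "Suc (length s) = N" | "N \<le> length s" by linarith
  then show ?case
  proof cases
    case 1
    then have "DB D s x = 1" by (simp add: DB_def)
    then show ?thesis using step snoc 1 by simp
  next
    case 2
    have l: "mult_proc (DB D) (s @ [x]) = 1" using step snoc 2 by (simp add: DB_def)
    have t: "take N (s @ [x]) = s @ [x]" using 2 by simp
    have hh: "h (s @ [x]) = s @ [x]" using 2 by (intro h_short) simp
    show ?thesis
    proof (cases "s @ [x] \<in> Z D")
      case True then show ?thesis using l t by simp
    next
      case False
      then have "mult_proc D (s @ [x]) \<noteq> 0" using 2 by (simp add: Z_def)
      then show ?thesis using l t hh 2 False by simp
    qed
  next
    case 3
    have t: "take N (s @ [x]) = take N s" using 3 by simp
    show ?thesis
    proof (cases "take N s \<in> Z D")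
      case True
      then have "DB D s x = 1" by (simp add: DB_def)
      then show ?thesis using step snoc 3 t True by simp
    next
      case False
      have ih: "mult_proc (DB D) s = mult_proc D (h s) / mult_proc D (take N s)"
        using snoc 3 False by simp
      show ?thesis
      proof (cases "Gs s")
        case True
        then have "DB D s x = D (h s) x" using 3 False by (simp add: DB_def)
        moreover have "h (s @ [x]) = h s @ [x]" using True by (simp add: h_snoc)
        ultimately show ?thesis using step ih 3 False t by (simp add: mult_proc_snoc)
      next
        case G: False
        then have "DB D s x = 1" by (simp add: DB_def)
        moreover have "h (s @ [x]) = h s" using G 3 by (simp add: h_snoc)
        ultimately show ?thesis using step ih 3 False t by simp
      qed
    qed
  qed
qed

lemma DB_test:
  assumes T: "test_supermartingale (\<lambda>s. I) (mult_proc D)"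
  shows "test_supermartingale \<phi> (mult_proc (DB D))"
proof -
  let ?T = "mult_proc D" let ?T' = "mult_proc (DB D)"
  have Tsm: "\<And>s p. p \<in> I \<Longrightarrow> p * (?T (s @ [True]) - ?T s) + (1 - p) * (?T (s @ [False]) - ?T s) \<le> 0"
    using T unfolding test_supermartingale_def sm_I by blast
  have Tnn: "\<And>s. ?T s \<ge> 0" using T unfolding test_supermartingale_def by blast
  have one: "?T' (s @ [x]) = 1" if "Suc (length s) = N" for s x
  proof (cases "s @ [x] \<in> Z D")
    case False
    then have "?T (s @ [x]) \<noteq> 0" using that by (simp add: Z_def)
    moreover have "h (s @ [x]) = s @ [x]" using that by (intro h_short) simp
    ultimately show ?thesis using that by (simp add: DB_closed)
  qed (use that in \<open>simp add: DB_closed\<close>)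
  have "p * (?T' (s @ [True]) - ?T' s) + (1 - p) * (?T' (s @ [False]) - ?T' s) \<le> 0"
    if p: "p \<in> \<phi> s" for s p
  proof -
    consider "Suc (length s) < N" | "Suc (length s) = N" | "N \<le> length s \<and> take N s \<in> Z D"
      | "N \<le> length s \<and> take N s \<notin> Z D" by linarith
    then show ?thesis
    proof cases
      case 1 then show ?thesis by (simp add: DB_closed)
    next
      case 2 then show ?thesis using one[OF 2] by (simp add: DB_closed)
    next
      case 3 then show ?thesis by (simp add: DB_closed)
    next
      case 4
      let ?c = "?T (take N s)"
      have cpos: "?c > 0" using 4 Tnn[of "take N s"] by (auto simp: Z_def)
      show ?thesis
      proof (cases "Gs s")
        case True
        then have pI: "p \<in> I" using Gsub[of s] p by (auto simp: Gs_def)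
        have e: "?T' (s @ [x]) = ?T (h s @ [x]) / ?c" for x
          using 4 True by (simp add: DB_closed h_snoc)
        have e2: "?T' s = ?T (h s) / ?c" using 4 by (simp add: DB_closed)
        have "p * (?T' (s @ [True]) - ?T' s) + (1 - p) * (?T' (s @ [False]) - ?T' s)
          = (p * (?T (h s @ [True]) - ?T (h s)) + (1 - p) * (?T (h s @ [False]) - ?T (h s))) / ?c"
          unfolding e e2 using cpos by (simp add: field_simps)
        also have "\<dots> \<le> 0" using Tsm[OF pI, of "h s"] cpos by (simp add: divide_nonpos_pos)
        finally show ?thesis .
      next
        case False
        then have "?T' (s @ [x]) = ?T' s" for x using 4 by (simp add: DB_closed h_snoc)
        then show ?thesis by simp
      qed
    qed
  qed
  moreover have "?T' s \<ge> 0" for s using Tnn by (simp add: DB_closed)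
  moreover have "?T' [] = 1" by simp
  ultimately show ?thesis unfolding test_supermartingale_def sm_phi by blast
qed

lemma DB_unbounded:
  assumes T: "test_supermartingale (\<lambda>s. I) (mult_proc D)" and u: "unbounded_on (mult_proc D) \<omega>"
  shows "unbounded_on (mult_proc (DB D)) \<omega>"
proof -
  let ?T = "mult_proc D"
  have nz: "?T (prefix \<omega> N) \<noteq> 0"
  proof
    assume z: "?T (prefix \<omega> N) = 0"
    have zk: "?T (prefix \<omega> (N + k)) = 0" for k
    proof (induction k)
      case 0 then show ?case using z by simp
    next
      case (Suc k)
      have "prefix \<omega> (N + Suc k) = prefix \<omega> (N + k) @ [\<omega> (N + k)]"
        by (simp only: add_Suc_right prefix_Suc)
      then show ?case using Suc.IH by (simp only: mult_proc_snoc mult_zero_left)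
    qed
    have "\<forall>n\<ge>N. ereal (?T (prefix \<omega> n)) = 0"
    proof (intro allI impI)
      fix n assume "N \<le> n"
      then obtain k where "n = N + k" using le_Suc_ex by blast
      then show "ereal (?T (prefix \<omega> n)) = 0" using zk[of k] by simp
    qed
    then have "eventually (\<lambda>n. ereal (?T (prefix \<omega> n)) = 0) sequentially"
      unfolding eventually_sequentially by blast
    then have "limsup (\<lambda>n. ereal (?T (prefix \<omega> n))) = limsup (\<lambda>n. 0::ereal)" by (rule Limsup_eq)
    then show False using u by (simp add: unbounded_on_def Limsup_const)
  qed
  have Tnn: "\<And>s. ?T s \<ge> 0" using T unfolding test_supermartingale_def by blast
  let ?c = "?T (prefix \<omega> N)"
  have cpos: "?c > 0" using nz Tnn[of "prefix \<omega> N"] by simp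
  have notZ: "prefix \<omega> N \<notin> Z D" using nz by (simp add: Z_def)
  have "eventually (\<lambda>n. ereal (mult_proc (DB D) (prefix \<omega> n)) = ereal (?T (prefix \<omega> n)) * ereal (1 / ?c)) sequentially"
    unfolding eventually_sequentially
    by (intro exI[of _ N]) (simp add: DB_closed take_prefix notZ h_prefix)
  then have "limsup (\<lambda>n. ereal (mult_proc (DB D) (prefix \<omega> n))) = limsup (\<lambda>n. ereal (?T (prefix \<omega> n)) * ereal (1 / ?c))"
    by (rule Limsup_eq)
  also have "\<dots> = limsup (\<lambda>n. ereal (?T (prefix \<omega> n))) * ereal (1 / ?c)"
    by (rule limsup_ereal_mult_right) (use cpos in simp)
  also have "\<dots> = \<infinity>" using u cpos by (simp add: unbounded_on_def)
  finally show ?thesis by (simp add: unbounded_on_def)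
qed

definition zt :: "(bool list \<Rightarrow> bool \<Rightarrow> real) \<Rightarrow> nat \<Rightarrow> nat" where
  "zt D v = (if v \<in> enc_sit ` Z D then 0 else 1)"

definition qB :: "(bool list \<Rightarrow> bool \<Rightarrow> real) \<Rightarrow> (nat \<Rightarrow> nat) \<Rightarrow> nat \<Rightarrow> nat" where
  "qB D q y = (if N \<le> lenc (fstd (fstd y)) then
      (if zt D (takec N (fstd (fstd y))) = 0 then ONE else
        (if G (fstd (fstd y)) = 0 then
           q (prod_encode (prod_encode (hcode N G (fstd (fstd y)), sndd (fstd y)), sndd y)) else ONE))
     else ONE)"

lemma qB_rec: "recursive1 q \<Longrightarrow> recursive1 (qB D q)"
proof -
  assume q: "recursive1 q"
  have ff: "recursive1 (\<lambda>y. fstd (fstd y))" by (rule rec1_fstd[OF rec1_fstd[OF rec1_id]])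
  have sf: "recursive1 (\<lambda>y. sndd (fstd y))" by (rule rec1_sndd[OF rec1_fstd[OF rec1_id]])
  have sn: "recursive1 (\<lambda>y. sndd y)" by (rule rec1_sndd[OF rec1_id])
  have z: "recursive1 (zt D)" unfolding zt_def[abs_def] by (rule rec1_mem) (intro finite_imageI Z_finite)
  have zz: "recursive1 (\<lambda>y. zt D (takec N (fstd (fstd y))))"
    by (rule rec1_comp[OF z rec1_takec[OF rec1_const ff]])
  have g: "recursive1 (\<lambda>y. G (fstd (fstd y)))" by (rule rec1_comp[OF Grec ff])
  have hc: "recursive1 (\<lambda>y. hcode N G (fstd (fstd y)))" by (rule rec1_comp[OF rec1_hcode[OF Grec] ff])
  have a: "recursive1 (\<lambda>y. q (prod_encode (prod_encode (hcode N G (fstd (fstd y)), sndd (fstd y)), sndd y)))"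
    by (rule rec1_comp[OF q rec1_pe[OF rec1_pe[OF hc sf] sn]])
  have l: "recursive1 (\<lambda>y. lenc (fstd (fstd y)))" by (rule rec1_lenc[OF ff])
  show ?thesis unfolding qB_def[abs_def]
    by (rule rec1_ifle[OF rec1_const l rec1_if0[OF zz rec1_const rec1_if0[OF g a rec1_const]] rec1_const])
qed

lemma qB_val: "rat_code (qB D q (prod_encode (enc_sitx (p, b), n))) =
   (if N \<le> length p \<and> take N p \<notin> Z D \<and> Gs p then rat_code (q (prod_encode (enc_sitx (h p, b), n))) else 1)"
proof -
  have "N \<le> length p \<Longrightarrow> zt D (takec N (enc_sit p)) = 0 \<longleftrightarrow> take N p \<in> Z D"
    by (auto simp: zt_def)
  then show ?thesis by (auto simp: qB_def enc_sitx_def hcode_h Gs_def)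
qed

lemma DB_lsc:
  assumes "lsc_on enc_sitx (\<lambda>(s, x). D s x)"
  shows "lsc_on enc_sitx (\<lambda>(s, x). DB D s x)"
proof -
  obtain q where q: "recursive1 q"
    "\<And>d n. rat_code (q (prod_encode (enc_sitx d, n))) \<le> rat_code (q (prod_encode (enc_sitx d, Suc n)))"
    "\<And>d. (\<lambda>n. rat_code (q (prod_encode (enc_sitx d, n)))) \<longlonglongrightarrow> (\<lambda>(s, x). D s x) d"
    using assms unfolding lsc_on_def by blast
  have mono: "rat_code (qB D q (prod_encode (enc_sitx d, n))) \<le> rat_code (qB D q (prod_encode (enc_sitx d, Suc n)))"
    for d n
  proof -
    obtain p b where d: "d = (p, b)" by (cases d)
    show ?thesis using q(2)[of "(h p, b)" n] unfolding d qB_val by simp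
  qed
  have lim: "(\<lambda>n. rat_code (qB D q (prod_encode (enc_sitx d, n)))) \<longlonglongrightarrow> (\<lambda>(s, x). DB D s x) d" for d
  proof -
    obtain p b where d: "d = (p, b)" by (cases d)
    show ?thesis
    proof (cases "N \<le> length p \<and> take N p \<notin> Z D \<and> Gs p")
      case True then show ?thesis using q(3)[of "(h p, b)"] unfolding d qB_val by (simp add: DB_def)
    next
      case False
      have e: "rat_code (qB D q (prod_encode (enc_sitx d, n))) = 1" for n
        unfolding d qB_val by (rule if_not_P[OF False])
      have "(\<lambda>(s, x). DB D s x) d = 1" unfolding d DB_def by (simp only: case_prod_conv if_not_P[OF False])
      then show ?thesis unfolding e by simp
    qed
  qed
  show ?thesis unfolding lsc_on_def using qB_rec[OF q(1)] mono lim by blast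
qed

end


lemma sum_lower_bound:
  fixes t :: "nat \<Rightarrow> real"
  assumes "\<And>k. t k \<ge> -1" "\<And>k. k \<ge> N0 \<Longrightarrow> t k \<ge> 0"
  shows "(\<Sum>k<n. t k) \<ge> - real N0"
proof -
  have "(\<Sum>k<n. t k) \<ge> - real (min n N0)"
  proof (induction n)
    case 0 then show ?case by simp
  next
    case (Suc n)
    show ?case
    proof (cases "n < N0")
      case True
      then have "min (Suc n) N0 = Suc (min n N0)" by simp
      then show ?thesis using Suc assms(1)[of n] by simp
    next
      case False
      then have "min (Suc n) N0 = min n N0" by simp
      then show ?thesis using Suc assms(2)[of n] False by simp
    qed
  qed
  moreover have "real (min n N0) \<le> real N0" by simp
  ultimately show ?thesis by linarith
qed

lemma ratio_bound:
  fixes A B S r N0 :: real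
  assumes "S > 0" "B \<ge> A - N0" "A / S > r / 2" "N0 \<le> S * (- r / 2)"
  shows "B / S > r"
proof -
  have "B / S \<ge> (A - N0) / S" using assms(1,2) by (simp add: divide_right_mono)
  moreover have "(A - N0) / S = A / S - N0 / S" by (simp add: diff_divide_distrib)
  moreover have "N0 / S \<le> - r / 2" using assms(1,4) by (simp add: pos_divide_le_eq mult.commute)
  ultimately show ?thesis using assms(3) by linarith
qed

lemma avg_lower:
  fixes sel x l a :: "nat \<Rightarrow> real"
  assumes sel: "\<And>k. sel k = 0 \<or> sel k = 1"
    and Sinf: "filterlim (\<lambda>n. \<Sum>k<n. sel k) at_top sequentially"
    and bnd: "\<And>k. l k - a k \<ge> -1" and ev: "\<And>k. k \<ge> N0 \<Longrightarrow> l k \<ge> a k"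
    and hyp: "0 \<le> liminf (\<lambda>n. ereal ((\<Sum>k<n. sel k * (x k - l k)) / (\<Sum>k<n. sel k)))"
  shows "0 \<le> liminf (\<lambda>n. ereal ((\<Sum>k<n. sel k * (x k - a k)) / (\<Sum>k<n. sel k)))"
proof -
  let ?S = "\<lambda>n. \<Sum>k<n. sel k"
  let ?A = "\<lambda>n. \<Sum>k<n. sel k * (x k - l k)"
  let ?B = "\<lambda>n. \<Sum>k<n. sel k * (x k - a k)"
  have BA: "?B n \<ge> ?A n - real N0" for n
  proof -
    have "?B n - ?A n = (\<Sum>k<n. sel k * (l k - a k))"
      by (simp add: sum_subtractf[symmetric] algebra_simps)
    also have "\<dots> \<ge> - real N0"
    proof (rule sum_lower_bound)
      show "sel k * (l k - a k) \<ge> -1" for k using sel[of k] bnd[of k] by auto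
      show "k \<ge> N0 \<Longrightarrow> sel k * (l k - a k) \<ge> 0" for k using sel[of k] ev[of k] by auto
    qed
    finally show ?thesis by linarith
  qed
  have hyp': "\<forall>y<0. eventually (\<lambda>n. y < ereal (?A n / ?S n)) sequentially"
    using hyp by (simp only: le_Liminf_iff)
  have "\<forall>y<0. eventually (\<lambda>n. y < ereal (?B n / ?S n)) sequentially"
  proof (intro allI impI)
    fix y :: ereal assume y: "y < 0"
    show "eventually (\<lambda>n. y < ereal (?B n / ?S n)) sequentially"
    proof (cases y)
      case (real r)
      then have r: "r < 0" using y by simp
      have "ereal (r / 2) < 0" using r by simp
      then have e1: "eventually (\<lambda>n. ereal (r / 2) < ereal (?A n / ?S n)) sequentially"
        using hyp' by blast
      have e2: "eventually (\<lambda>n. 2 * real N0 / (- r) + 1 \<le> ?S n) sequentially"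
        using Sinf by (simp add: filterlim_at_top)
      show ?thesis
      proof (rule eventually_mono[OF eventually_conj[OF e1 e2]])
        fix n assume h: "ereal (r / 2) < ereal (?A n / ?S n) \<and> 2 * real N0 / (- r) + 1 \<le> ?S n"
        have q: "2 * real N0 / (- r) \<ge> 0" using r by (intro divide_nonneg_pos) auto
        then have Spos: "?S n > 0" using h by linarith
        have "2 * real N0 / (- r) \<le> ?S n" using h by linarith
        moreover have nr: "- r > 0" using r by simp
        ultimately have "2 * real N0 \<le> ?S n * (- r)" by (simp only: pos_divide_le_eq[OF nr])
        then have "real N0 \<le> ?S n * (- r / 2)" by simp
        then have "?B n / ?S n > r" using ratio_bound[OF Spos BA[of n]] h by simp
        then show "y < ereal (?B n / ?S n)" using real by simp
      qed
    next
      case PInf then show ?thesis using y by simp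
    next
      case MInf then show ?thesis by simp
    qed
  qed
  then show ?thesis by (simp only: le_Liminf_iff)
qed

lemma avg_upper:
  fixes sel x u b :: "nat \<Rightarrow> real"
  assumes sel: "\<And>k. sel k = 0 \<or> sel k = 1"
    and Sinf: "filterlim (\<lambda>n. \<Sum>k<n. sel k) at_top sequentially"
    and bnd: "\<And>k. b k - u k \<ge> -1" and ev: "\<And>k. k \<ge> N0 \<Longrightarrow> b k \<ge> u k"
    and hyp: "limsup (\<lambda>n. ereal ((\<Sum>k<n. sel k * (x k - u k)) / (\<Sum>k<n. sel k))) \<le> 0"
  shows "limsup (\<lambda>n. ereal ((\<Sum>k<n. sel k * (x k - b k)) / (\<Sum>k<n. sel k))) \<le> 0"
proof -
  let ?S = "\<lambda>n. \<Sum>k<n. sel k"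
  let ?A = "\<lambda>n. \<Sum>k<n. sel k * (x k - u k)"
  let ?B = "\<lambda>n. \<Sum>k<n. sel k * (x k - b k)"
  have BA: "- ?B n \<ge> - ?A n - real N0" for n
  proof -
    have "?A n - ?B n = (\<Sum>k<n. sel k * (b k - u k))"
      by (simp add: sum_subtractf[symmetric] algebra_simps)
    also have "\<dots> \<ge> - real N0"
    proof (rule sum_lower_bound)
      show "sel k * (b k - u k) \<ge> -1" for k using sel[of k] bnd[of k] by auto
      show "k \<ge> N0 \<Longrightarrow> sel k * (b k - u k) \<ge> 0" for k using sel[of k] ev[of k] by auto
    qed
    finally show ?thesis by linarith
  qed
  have hyp': "\<forall>y>0. eventually (\<lambda>n. y > ereal (?A n / ?S n)) sequentially"
    using hyp by (simp only: Limsup_le_iff)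
  have "\<forall>y>0. eventually (\<lambda>n. y > ereal (?B n / ?S n)) sequentially"
  proof (intro allI impI)
    fix y :: ereal assume y: "y > 0"
    show "eventually (\<lambda>n. y > ereal (?B n / ?S n)) sequentially"
    proof (cases y)
      case (real r')
      define r where "r = - r'"
      then have r: "r < 0" using y real by simp
      have "ereal (- r / 2) > 0" using r by simp
      then have e1: "eventually (\<lambda>n. ereal (- r / 2) > ereal (?A n / ?S n)) sequentially"
        using hyp' by blast
      have e2: "eventually (\<lambda>n. 2 * real N0 / (- r) + 1 \<le> ?S n) sequentially"
        using Sinf by (simp add: filterlim_at_top)
      show ?thesis
      proof (rule eventually_mono[OF eventually_conj[OF e1 e2]])
        fix n assume h: "ereal (- r / 2) > ereal (?A n / ?S n) \<and> 2 * real N0 / (- r) + 1 \<le> ?S n"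
        have q: "2 * real N0 / (- r) \<ge> 0" using r by (intro divide_nonneg_pos) auto
        then have Spos: "?S n > 0" using h by linarith
        have "2 * real N0 / (- r) \<le> ?S n" using h by linarith
        moreover have nr: "- r > 0" using r by simp
        ultimately have "2 * real N0 \<le> ?S n * (- r)" by (simp only: pos_divide_le_eq[OF nr])
        then have "real N0 \<le> ?S n * (- r / 2)" by simp
        moreover have "(- ?A n) / ?S n > r / 2" using h by simp
        ultimately have "(- ?B n) / ?S n > r" using ratio_bound[OF Spos BA[of n]] by simp
        then show "y > ereal (?B n / ?S n)" using real r_def by simp
      qed
    next
      case PInf then show ?thesis by simp
    next
      case MInf then show ?thesis using y by simp
    qed
  qed
  then show ?thesis by (simp only: Limsup_le_iff)
qed

context setting begin

lemma CH_transfer: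
  assumes "CH_cond \<phi> \<omega> Sel"
  shows "CH_cond (\<lambda>s. I) \<omega> Sel"
  unfolding CH_cond_def
proof (intro impI conjI)
  let ?sel = "\<lambda>k. of_bool (Sel (prefix \<omega> k)) :: real"
  assume Sinf: "filterlim (\<lambda>n. \<Sum>k<n. ?sel k) at_top sequentially"
  then have h1: "0 \<le> liminf (\<lambda>n. ereal ((\<Sum>k<n. ?sel k * (of_bool (\<omega> k) - lowerF \<phi> (prefix \<omega> k))) / (\<Sum>k<n. ?sel k)))"
    and h2: "limsup (\<lambda>n. ereal ((\<Sum>k<n. ?sel k * (of_bool (\<omega> k) - upperF \<phi> (prefix \<omega> k))) / (\<Sum>k<n. ?sel k))) \<le> 0"
    using assms unfolding CH_cond_def by auto
  have sel: "\<And>k. ?sel k = 0 \<or> ?sel k = 1" by simp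
  obtain N1 where N1: "\<And>k. k \<ge> N1 \<Longrightarrow> L - e1 < lo k" using ev_lo[of "L - e1"] e1 by auto
  show "0 \<le> liminf (\<lambda>n. ereal ((\<Sum>k<n. ?sel k * (of_bool (\<omega> k) - lowerF (\<lambda>s. I) (prefix \<omega> k))) / (\<Sum>k<n. ?sel k)))"
  proof (rule avg_lower[OF sel Sinf _ _ h1])
    show "lowerF \<phi> (prefix \<omega> k) - lowerF (\<lambda>s. I) (prefix \<omega> k) \<ge> -1" for k
    proof -
      have "max (L - e1) 0 \<le> 1" using liminf_lo(3) e1 by simp
      then show ?thesis using I_props(3)[of "prefix \<omega> k"] fs_props(2)[OF fs, of "prefix \<omega> k"] by linarith
    qed
    show "k \<ge> N1 \<Longrightarrow> lowerF \<phi> (prefix \<omega> k) \<ge> lowerF (\<lambda>s. I) (prefix \<omega> k)" for k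
      using I_props(3)[of "prefix \<omega> k"] fs_props(2)[OF fs, of "prefix \<omega> k"] N1[of k] by (simp add: lo_def)
  qed
  obtain N2 where N2: "\<And>k. k \<ge> N2 \<Longrightarrow> hi k < U + e2" using ev_hi[of "U + e2"] e2 by auto
  show "limsup (\<lambda>n. ereal ((\<Sum>k<n. ?sel k * (of_bool (\<omega> k) - upperF (\<lambda>s. I) (prefix \<omega> k))) / (\<Sum>k<n. ?sel k))) \<le> 0"
  proof (rule avg_upper[OF sel Sinf _ _ h2])
    show "upperF (\<lambda>s. I) (prefix \<omega> k) - upperF \<phi> (prefix \<omega> k) \<ge> -1" for k
    proof -
      have "min (U + e2) 1 \<ge> 0" using limsup_hi(2) e2 by simp
      then show ?thesis using I_props(4)[of "prefix \<omega> k"] fs_props(4)[OF fs, of "prefix \<omega> k"] by linarith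
    qed
    show "k \<ge> N2 \<Longrightarrow> upperF (\<lambda>s. I) (prefix \<omega> k) \<ge> upperF \<phi> (prefix \<omega> k)" for k
      using I_props(4)[of "prefix \<omega> k"] fs_props(4)[OF fs, of "prefix \<omega> k"] N2[of k] by (simp add: hi_def)
  qed
qed

end


context good begin

lemma S_transfer:
  assumes T: "computable_on enc_sit T" "test_supermartingale (\<lambda>s. I) T"
    and tau: "computable_on enc_nat \<tau>" "mono \<tau>" "\<forall>n. \<tau> n \<ge> 0" "\<forall>B. \<exists>n. \<tau> n > B"
    and ls: "limsup (\<lambda>n. ereal (T (prefix \<omega> n) - \<tau> n)) \<ge> 0"
  shows "\<exists>T \<tau>. computable_on enc_sit T \<and> test_supermartingale \<phi> T
      \<and> computable_on enc_nat \<tau> \<and> mono \<tau> \<and> (\<forall>n. \<tau> n \<ge> 0) \<and> (\<forall>B. \<exists>n. \<tau> n > B)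
      \<and> limsup (\<lambda>n. ereal (T (prefix \<omega> n) - \<tau> n)) \<ge> 0"
proof -
  obtain M :: nat where M: "M \<ge> 1" "\<And>u. length u = N \<Longrightarrow> T u \<le> real M" using M_exists[of T] by blast
  have Mpos: "real M > 0" "real M \<ge> 1" using M by auto
  define \<tau>' where "\<tau>' n = \<tau> n / real M" for n
  have c1: "computable_on enc_sit (TA T M)" by (rule TA_computable[OF T(1) M(1)])
  have c2: "test_supermartingale \<phi> (TA T M)" by (rule TA_test[OF T(2) M(1) M(2)])
  obtain q where q: "recursive1 q" "\<And>d n. \<bar>\<tau> d - rat_code (q (prod_encode (enc_nat d, n)))\<bar> < (1/2)^n"
    using tau(1) unfolding computable_on_def by blast
  have "\<bar>\<tau>' d - rat_code (scale M (q (prod_encode (enc_nat d, n))))\<bar> < (1/2)^n" for d n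
  proof -
    have "\<bar>\<tau>' d - rat_code (scale M (q (prod_encode (enc_nat d, n))))\<bar>
        = \<bar>\<tau> d - rat_code (q (prod_encode (enc_nat d, n)))\<bar> / real M"
      using M(1) by (simp add: \<tau>'_def rat_code_scale diff_divide_distrib[symmetric])
    also have "\<dots> \<le> \<bar>\<tau> d - rat_code (q (prod_encode (enc_nat d, n)))\<bar>"
      using divide_left_mono[of 1 "real M" "\<bar>\<tau> d - rat_code (q (prod_encode (enc_nat d, n)))\<bar>"] Mpos
      by simp
    also have "\<dots> < (1/2)^n" by (rule q(2))
    finally show ?thesis .
  qed
  then have c3: "computable_on enc_nat \<tau>'"
    unfolding computable_on_def using rec1_scale[OF q(1)] by blast
  have c4: "mono \<tau>'" using tau(2) Mpos unfolding mono_def \<tau>'_def by (simp add: divide_right_mono)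
  have c5: "\<forall>n. \<tau>' n \<ge> 0" using tau(3) Mpos by (simp add: \<tau>'_def)
  have c6: "\<forall>B. \<exists>n. \<tau>' n > B"
  proof
    fix B
    obtain n where "\<tau> n > B * real M" using tau(4) by blast
    then show "\<exists>n. \<tau>' n > B" using Mpos by (intro exI[of _ n]) (simp add: \<tau>'_def pos_less_divide_eq)
  qed
  have "eventually (\<lambda>n. ereal (TA T M (prefix \<omega> n) - \<tau>' n) = ereal (T (prefix \<omega> n) - \<tau> n) * ereal (1 / real M))
      sequentially"
    unfolding eventually_sequentially
    by (intro exI[of _ N]) (simp add: TA_prefix \<tau>'_def diff_divide_distrib)
  then have "limsup (\<lambda>n. ereal (TA T M (prefix \<omega> n) - \<tau>' n))
      = limsup (\<lambda>n. ereal (T (prefix \<omega> n) - \<tau> n) * ereal (1 / real M))"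
    by (rule Limsup_eq)
  also have "\<dots> = limsup (\<lambda>n. ereal (T (prefix \<omega> n) - \<tau> n)) * ereal (1 / real M)"
    by (rule limsup_ereal_mult_right) simp
  also have "\<dots> \<ge> 0" using ls by (intro ereal_0_le_mult) auto
  finally have c7: "limsup (\<lambda>n. ereal (TA T M (prefix \<omega> n) - \<tau>' n)) \<ge> 0" .
  show ?thesis using c1 c2 c3 c4 c5 c6 c7 by blast
qed

end

theorem proposition13:
  fixes R :: rnotion and \<phi> :: "bool list \<Rightarrow> real set" and \<omega> :: "nat \<Rightarrow> bool"
    and \<epsilon>1 \<epsilon>2 :: real
  assumes "forecasting_system \<phi>" and "computable_fs \<phi>"
    and "is_random R \<phi> \<omega>"
    and "\<epsilon>1 > 0" and "\<epsilon>2 > 0"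
  shows "is_random R (\<lambda>s. limit_interval \<phi> \<omega> \<epsilon>1 \<epsilon>2) \<omega>"
proof -
  interpret setting \<phi> \<omega> \<epsilon>1 \<epsilon>2 using assms by unfold_locales auto
  obtain G N where GN: "N \<ge> 1" "recursive1 G" "\<And>s. G (enc_sit s) = 0 \<Longrightarrow> \<phi> s \<subseteq> I"
    "\<And>n. n \<ge> N \<Longrightarrow> G (enc_sit (prefix \<omega> n)) = 0"
    using good_exists[OF assms(2)] by blast
  interpret good \<phi> \<omega> \<epsilon>1 \<epsilon>2 G N using GN by unfold_locales auto
  have Ieq: "limit_interval \<phi> \<omega> \<epsilon>1 \<epsilon>2 = I" by (simp add: I_def)
  show ?thesis
  proof (cases R)
    case R_ML
    show ?thesis unfolding R_ML is_random.simps random_ML_def Ieq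
    proof
      assume "\<exists>T. lsc_on enc_sit T \<and> test_supermartingale (\<lambda>s. I) T \<and> unbounded_on T \<omega>"
      then obtain T where T: "lsc_on enc_sit T" "test_supermartingale (\<lambda>s. I) T" "unbounded_on T \<omega>" by blast
      obtain M :: nat where M: "M \<ge> 1" "\<And>u. length u = N \<Longrightarrow> T u \<le> real M" using M_exists[of T] by blast
      have "lsc_on enc_sit (TA T M) \<and> test_supermartingale \<phi> (TA T M) \<and> unbounded_on (TA T M) \<omega>"
        using TA_lsc[OF T(1) M(1)] TA_test[OF T(2) M] TA_unbounded[OF T(3) M(1)] by blast
      moreover have r: "random_ML \<phi> \<omega>" using assms(3) R_ML by simp
      ultimately show False unfolding random_ML_def by blast
    qed
  next
    case R_wML
    show ?thesis unfolding R_wML is_random.simps random_wML_def Ieq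
    proof
      assume "\<exists>D. lsc_on enc_sitx (\<lambda>(s, x). D s x) \<and> test_supermartingale (\<lambda>s. I) (mult_proc D)
          \<and> unbounded_on (mult_proc D) \<omega>"
      then obtain D where D: "lsc_on enc_sitx (\<lambda>(s, x). D s x)" "test_supermartingale (\<lambda>s. I) (mult_proc D)"
        "unbounded_on (mult_proc D) \<omega>" by blast
      have "lsc_on enc_sitx (\<lambda>(s, x). DB D s x) \<and> test_supermartingale \<phi> (mult_proc (DB D))
          \<and> unbounded_on (mult_proc (DB D)) \<omega>"
        using DB_lsc[OF D(1)] DB_test[OF D(2)] DB_unbounded[OF D(2,3)] by blast
      moreover have r: "random_wML \<phi> \<omega>" using assms(3) R_wML by simp
      ultimately show False unfolding random_wML_def by blast
    qed
  next
    case R_C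
    show ?thesis unfolding R_C is_random.simps random_C_def Ieq
    proof
      assume "\<exists>T. computable_on enc_sit T \<and> test_supermartingale (\<lambda>s. I) T \<and> unbounded_on T \<omega>"
      then obtain T where T: "computable_on enc_sit T" "test_supermartingale (\<lambda>s. I) T" "unbounded_on T \<omega>" by blast
      obtain M :: nat where M: "M \<ge> 1" "\<And>u. length u = N \<Longrightarrow> T u \<le> real M" using M_exists[of T] by blast
      have "computable_on enc_sit (TA T M) \<and> test_supermartingale \<phi> (TA T M) \<and> unbounded_on (TA T M) \<omega>"
        using TA_computable[OF T(1) M(1)] TA_test[OF T(2) M] TA_unbounded[OF T(3) M(1)] by blast
      moreover have r: "random_C \<phi> \<omega>" using assms(3) R_C by simp
      ultimately show False unfolding random_C_def by blast
    qed
  next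
    case R_S
    show ?thesis unfolding R_S is_random.simps random_S_def Ieq
    proof
      assume "\<exists>T \<tau>. computable_on enc_sit T \<and> test_supermartingale (\<lambda>s. I) T
          \<and> computable_on enc_nat \<tau> \<and> mono \<tau> \<and> (\<forall>n. \<tau> n \<ge> 0) \<and> (\<forall>B. \<exists>n. \<tau> n > B)
          \<and> limsup (\<lambda>n. ereal (T (prefix \<omega> n) - \<tau> n)) \<ge> 0"
      then obtain T \<tau> where T: "computable_on enc_sit T" "test_supermartingale (\<lambda>s. I) T"
          "computable_on enc_nat \<tau>" "mono \<tau>" "\<forall>n. \<tau> n \<ge> 0" "\<forall>B. \<exists>n. \<tau> n > B"
          "limsup (\<lambda>n. ereal (T (prefix \<omega> n) - \<tau> n)) \<ge> 0" by blast
      have "random_S \<phi> \<omega>" using assms(3) R_S by simp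
      with S_transfer[OF T] show False unfolding random_S_def by blast
    qed
  next
    case R_CH
    show ?thesis using assms(3) CH_transfer unfolding R_CH is_random.simps random_CH_def Ieq by blast
  next
    case R_wCH
    show ?thesis using assms(3) CH_transfer unfolding R_wCH is_random.simps random_wCH_def Ieq by blast
  qed
qed


end
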